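(* Let $F=(F_1,\ldots,F_{\ell})$ be an $m$-suitable rooted forest-tuple with $m>e(F)$. Let $B$ be a complete graph on $m+v(F)-e(F)$ vertices, all edges free, and fix an injective assignment of the roots of $F$ to vertices of $B$. Then, playing the Waiter-Client game on $B$, Waiter can force a red copy $\bar F=\bar F_1 \cup \cdots \cup \bar F_{\ell}$ of $F_1 \cup \cdots \cup F_{\ell}$ (with $\bar F_i$ the copy of $F_i$) within $e(F)$ rounds such that: (a) every root is mapped to its assigned vertex; (b) no edge between two images of roots is colored; (c) for every $i\in[\ell]$ there are no blue edges with both endpoints in $V(\bar F_i)$; (d) for every $i\in[\ell]$ there are no red edges with both endpoints in $V(\bar F_i)$ other than the edges of $\bar F_i$; (e) every colored edge intersects $V(\bar F)$; (f) every vertex not in $V(\bar F)$ is incident with at most one colored edge, and the other endpoint of such an edge is not a leaf of $\bar F$.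
   Context: A rooted forest is a forest each of whose components contains exactly one designated vertex, its root. A leaf is a vertex of degree 1 that is not a root. A rooted forest-tuple is a tuple $F=(F_1,\ldots,F_\ell)$ of pairwise vertex-disjoint rooted forests with $e(F_i)>0$ for some $i$; $v(F)$ and $e(F)$ are the total numbers of vertices and edges. Define $a(F)=\max_i e(F_i)$, $k(F)=|\{i: e(F_i)=a(F)\}|$, $t(F)=|\{i: e(F_i)>0\}|$. $F$ is suitable if $3a(F)+k(F)-e(F)\le 2$, or if $a(F)=1$ and $t(F)\ge 4$. A rooted forest-tuple $F=(F_1,\dots,F_\ell)$ is a valid subforest of a rooted forest-tuple $G=(G_1,\dots,G_{\ell''})$ if $\ell\le\ell''$, $F_i\subseteq G_i$ for every $i\in[\ell]$, and every root of $F_i$ is a root of $G_i$. $F$ is $m$-suitable if it is a valid subforest of some suitable rooted forest-tuple $G$ with $e(G)=m$. Waiter-Client game on $B$: in each round Waiter offers two free edges, Client colors one red and the other becomes blue. *)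

theory Defs
  imports Main
begin

type_synonym 'a rforest = "'a set \<times> 'a set set \<times> 'a set"

definition fV :: "'a rforest \<Rightarrow> 'a set" where "fV F = fst F"
definition fE :: "'a rforest \<Rightarrow> 'a set set" where "fE F = fst (snd F)"
definition fR :: "'a rforest \<Rightarrow> 'a set" where "fR F = snd (snd F)"

definition is_graph :: "'a set \<Rightarrow> 'a set set \<Rightarrow> bool" where
  "is_graph V E \<longleftrightarrow> finite V \<and> (\<forall>e\<in>E. \<exists>x y. x \<in> V \<and> y \<in> V \<and> x \<noteq> y \<and> e = {x, y})"

definition is_cycle :: "'a set set \<Rightarrow> 'a list \<Rightarrow> bool" where
  "is_cycle E xs \<longleftrightarrow> length xs \<ge> 3 \<and> distinct xs \<and>
     (\<forall>i < length xs. {xs ! i, xs ! ((i + 1) mod length xs)} \<in> E)"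

definition acyclic_graph :: "'a set set \<Rightarrow> bool" where
  "acyclic_graph E \<longleftrightarrow> \<not> (\<exists>xs. is_cycle E xs)"

definition connected_in :: "'a set set \<Rightarrow> 'a \<Rightarrow> 'a \<Rightarrow> bool" where
  "connected_in E = (\<lambda>x y. {x, y} \<in> E)\<^sup>*\<^sup>*"

definition rooted_forest :: "'a rforest \<Rightarrow> bool" where
  "rooted_forest F \<longleftrightarrow> is_graph (fV F) (fE F) \<and> acyclic_graph (fE F) \<and> fR F \<subseteq> fV F \<and>
     (\<forall>v \<in> fV F. \<exists>!r. r \<in> fR F \<and> connected_in (fE F) v r)"

definition leaves :: "'a rforest \<Rightarrow> 'a set" where
  "leaves F = {v \<in> fV F. card {e \<in> fE F. v \<in> e} = 1 \<and> v \<notin> fR F}"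

definition rooted_forest_tuple :: "'a rforest list \<Rightarrow> bool" where
  "rooted_forest_tuple Fs \<longleftrightarrow> (\<forall>F \<in> set Fs. rooted_forest F) \<and>
     (\<forall>i < length Fs. \<forall>j < length Fs. i \<noteq> j \<longrightarrow> fV (Fs ! i) \<inter> fV (Fs ! j) = {}) \<and>
     (\<exists>F \<in> set Fs. card (fE F) > 0)"

definition vF :: "'a rforest list \<Rightarrow> nat" where "vF Fs = (\<Sum>F \<leftarrow> Fs. card (fV F))"
definition eF :: "'a rforest list \<Rightarrow> nat" where "eF Fs = (\<Sum>F \<leftarrow> Fs. card (fE F))"
definition aF :: "'a rforest list \<Rightarrow> nat" where "aF Fs = Max (set (map (\<lambda>F. card (fE F)) Fs))"
definition kF :: "'a rforest list \<Rightarrow> nat" where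
  "kF Fs = length (filter (\<lambda>F. card (fE F) = aF Fs) Fs)"
definition tF :: "'a rforest list \<Rightarrow> nat" where
  "tF Fs = length (filter (\<lambda>F. card (fE F) > 0) Fs)"

definition tuple_verts :: "'a rforest list \<Rightarrow> 'a set" where "tuple_verts Fs = (\<Union>F \<in> set Fs. fV F)"
definition tuple_roots :: "'a rforest list \<Rightarrow> 'a set" where "tuple_roots Fs = (\<Union>F \<in> set Fs. fR F)"
definition tuple_leaves :: "'a rforest list \<Rightarrow> 'a set" where "tuple_leaves Fs = (\<Union>F \<in> set Fs. leaves F)"

definition suitable :: "'a rforest list \<Rightarrow> bool" where
  "suitable Fs \<longleftrightarrow> rooted_forest_tuple Fs \<and>
     (3 * int (aF Fs) + int (kF Fs) - int (eF Fs) \<le> 2 \<or> (aF Fs = 1 \<and> tF Fs \<ge> 4))"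

definition valid_subforest :: "'a rforest list \<Rightarrow> 'a rforest list \<Rightarrow> bool" where
  "valid_subforest Fs Gs \<longleftrightarrow> rooted_forest_tuple Fs \<and> rooted_forest_tuple Gs \<and>
     length Fs \<le> length Gs \<and>
     (\<forall>i < length Fs. fV (Fs ! i) \<subseteq> fV (Gs ! i) \<and> fE (Fs ! i) \<subseteq> fE (Gs ! i) \<and>
                      fR (Fs ! i) \<subseteq> fR (Gs ! i))"

definition m_suitable :: "nat \<Rightarrow> 'a rforest list \<Rightarrow> bool" where
  "m_suitable m Fs \<longleftrightarrow> (\<exists>Gs. suitable Gs \<and> eF Gs = m \<and> valid_subforest Fs Gs)"

definition complete_edges :: "'b set \<Rightarrow> 'b set set" where
  "complete_edges V = {e. \<exists>x y. x \<in> V \<and> y \<in> V \<and> x \<noteq> y \<and> e = {x, y}}"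

text \<open>In a round Waiter offers two distinct free edges;
 Client colours one red, the other becomes blue.\<close>
fun wc_force :: "'b set \<Rightarrow> nat \<Rightarrow> ('b set set \<Rightarrow> 'b set set \<Rightarrow> bool) \<Rightarrow> 'b set set \<Rightarrow> 'b set set \<Rightarrow> bool" where
  "wc_force V 0 P R Bl = P R Bl"
| "wc_force V (Suc n) P R Bl = (P R Bl \<or>
     (\<exists>e1 e2. e1 \<noteq> e2 \<and> e1 \<in> complete_edges V - (R \<union> Bl) \<and> e2 \<in> complete_edges V - (R \<union> Bl) \<and>
        wc_force V n P (insert e1 R) (insert e2 Bl) \<and> wc_force V n P (insert e2 R) (insert e1 Bl)))"

definition good_red_copy :: "'a rforest list \<Rightarrow> 'b set \<Rightarrow> ('a \<Rightarrow> 'b) \<Rightarrow> 'b set set \<Rightarrow> 'b set set \<Rightarrow> bool" where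
  "good_red_copy Fs VB \<phi> R Bl \<longleftrightarrow> (\<exists>f.
     inj_on f (tuple_verts Fs) \<and> f ` tuple_verts Fs \<subseteq> VB \<and>
     (\<forall>i < length Fs. \<forall>e \<in> fE (Fs ! i). f ` e \<in> R) \<and>
     \<comment> \<open>(a)\<close>
     (\<forall>r \<in> tuple_roots Fs. f r = \<phi> r) \<and>
     \<comment> \<open>(b)\<close>
     (\<forall>r1 \<in> tuple_roots Fs. \<forall>r2 \<in> tuple_roots Fs. r1 \<noteq> r2 \<longrightarrow> {\<phi> r1, \<phi> r2} \<notin> R \<union> Bl) \<and>
     \<comment> \<open>(c)\<close>
     (\<forall>i < length Fs. \<forall>e \<in> Bl. \<not> e \<subseteq> f ` fV (Fs ! i)) \<and>
     \<comment> \<open>(d)\<close>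
     (\<forall>i < length Fs. \<forall>e \<in> R. e \<subseteq> f ` fV (Fs ! i) \<longrightarrow> e \<in> (\<lambda>e'. f ` e') ` fE (Fs ! i)) \<and>
     \<comment> \<open>(e)\<close>
     (\<forall>e \<in> R \<union> Bl. e \<inter> f ` tuple_verts Fs \<noteq> {}) \<and>
     \<comment> \<open>(f)\<close>
     (\<forall>u \<in> VB - f ` tuple_verts Fs.
        card {e \<in> R \<union> Bl. u \<in> e} \<le> 1 \<and>
        (\<forall>w. {u, w} \<in> R \<union> Bl \<longrightarrow> w \<notin> f ` tuple_leaves Fs)))"

end

theory Submission
  imports Defs
begin

lemma rf3: "rooted_forest (V,E,R) \<longleftrightarrow> is_graph V E \<and> acyclic_graph E \<and> R \<subseteq> V \<and>
     (\<forall>v \<in> V. \<exists>!r. r \<in> R \<and> connected_in E v r)"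
  by (simp add: rooted_forest_def fV_def fE_def fR_def)

lemma conn_sym: "connected_in E x y \<Longrightarrow> connected_in E y x"
  unfolding connected_in_def
proof (induction rule: rtranclp_induct)
  case base then show ?case by simp
next
  case (step y z)
  have "{z,y} \<in> E" using step(2) by (simp add: insert_commute)
  then show ?case using step(3) by (meson converse_rtranclp_into_rtranclp)
qed

lemma conn_trans: "connected_in E x y \<Longrightarrow> connected_in E y z \<Longrightarrow> connected_in E x z"
  unfolding connected_in_def by (rule rtranclp_trans)

lemma conn_edge: "{x,y} \<in> E \<Longrightarrow> connected_in E x y"
  unfolding connected_in_def by auto

lemma conn_refl: "connected_in E x x"
  unfolding connected_in_def by auto

lemma conn_mono: assumes "E \<subseteq> E'" "connected_in E x y" shows "connected_in E' x y"
  using assms(2) unfolding connected_in_def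
proof (induction rule: rtranclp_induct)
  case (step y z)
  then show ?case using assms(1) by (meson rtranclp.rtrancl_into_rtrancl subsetD)
qed simp

lemma conn_empty: "connected_in {} x y \<Longrightarrow> x = y"
  unfolding connected_in_def
  by (induction rule: rtranclp_induct) auto

lemma graph_edge: assumes "is_graph V E" "{a,b} \<in> E" shows "a \<in> V \<and> b \<in> V \<and> a \<noteq> b"
proof -
  have "\<exists>x y. x \<in> V \<and> y \<in> V \<and> x \<noteq> y \<and> {a,b} = {x,y}"
    using assms unfolding is_graph_def by (elim conjE ballE) auto
  then obtain x y where xy: "x \<in> V" "y \<in> V" "x \<noteq> y" "{a,b} = {x,y}" by blast
  from xy(4) have "a = x \<and> b = y \<or> a = y \<and> b = x" by (simp add: doubleton_eq_iff)
  then show ?thesis using xy by blast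
qed

lemma graph_finite: "is_graph V E \<Longrightarrow> finite E"
proof -
  assume g: "is_graph V E"
  then have "E \<subseteq> Pow V" unfolding is_graph_def by (auto simp: Pow_def)
  moreover have "finite V" using g unfolding is_graph_def by blast
  ultimately show ?thesis using finite_subset by blast
qed

lemma conn_in_V: assumes "is_graph V E" "connected_in E v w" "v \<in> V" shows "w \<in> V"
  using assms(2,3) unfolding connected_in_def
proof (induction rule: rtranclp_induct)
  case (step y z)
  then show ?case using graph_edge[OF assms(1) step(2)] by blast
qed simp

fun walk :: "'a set set \<Rightarrow> 'a list \<Rightarrow> bool" where
  "walk E [] = True"
| "walk E [x] = True"
| "walk E (x # y # xs) = ({x,y} \<in> E \<and> walk E (y # xs))"

lemma walk_prefix: "walk E (xs @ ys) \<Longrightarrow> walk E xs"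
  by (induction E xs rule: walk.induct) auto

lemma walk_snoc: "walk E xs \<Longrightarrow> xs \<noteq> [] \<Longrightarrow> {last xs, z} \<in> E \<Longrightarrow> walk E (xs @ [z])"
  by (induction E xs rule: walk.induct) auto

lemma walk_nth: "walk E xs \<Longrightarrow> Suc i < length xs \<Longrightarrow> {xs!i, xs!Suc i} \<in> E"
proof (induction E xs arbitrary: i rule: walk.induct)
  case (3 E x y xs)
  then show ?case by (cases i) auto
qed auto

lemma conn_path: "connected_in E a b \<Longrightarrow>
   \<exists>xs. walk E xs \<and> distinct xs \<and> xs \<noteq> [] \<and> hd xs = a \<and> last xs = b"
  unfolding connected_in_def
proof (induction rule: rtranclp_induct)
  case base
  then show ?case by (intro exI[of _ "[a]"]) auto
next
  case (step y z)
  then obtain xs where xs: "walk E xs" "distinct xs" "xs \<noteq> []" "hd xs = a" "last xs = y" by blast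
  show ?case
  proof (cases "z \<in> set xs")
    case True
    then obtain ys zs where sp: "xs = ys @ z # zs" by (meson split_list)
    have "walk E (ys @ [z])" using xs(1) sp walk_prefix[of E "ys @ [z]" zs] by simp
    moreover have "distinct (ys @ [z])" using xs(2) sp by simp
    moreover have "hd (ys @ [z]) = a" using xs(4) sp by (cases ys) auto
    ultimately show ?thesis by (intro exI[of _ "ys @ [z]"]) auto
  next
    case False
    have "walk E (xs @ [z])" using walk_snoc[OF xs(1) xs(3)] xs(5) step(2) by simp
    then show ?thesis using xs False by (intro exI[of _ "xs @ [z]"]) auto
  qed
qed

lemma no_cycle_conn:
  assumes ac: "acyclic_graph E" and e: "{x,r} \<in> E" and ne: "x \<noteq> r"
    and c: "connected_in (E - {{x,r}}) x r"
  shows False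
proof -
  obtain xs where xs: "walk (E - {{x,r}}) xs" "distinct xs" "xs \<noteq> []" "hd xs = x" "last xs = r"
    using conn_path[OF c] by blast
  have l2: "length xs \<ge> 2"
  proof (rule ccontr)
    assume "\<not> ?thesis"
    moreover have "length xs > 0" using xs(3) by simp
    ultimately have "length xs = 1" by linarith
    then have "hd xs = last xs" using xs(3) by (simp add: hd_conv_nth last_conv_nth)
    then show False using xs ne by simp
  qed
  have l3: "length xs \<ge> 3"
  proof (rule ccontr)
    assume "\<not> ?thesis"
    then have "length xs = 2" using l2 by simp
    then have "{xs!0, xs!Suc 0} \<in> E - {{x,r}}" using walk_nth[OF xs(1), of 0] by simp
    moreover have "xs!0 = x" using xs(4) xs(3) by (simp add: hd_conv_nth)
    moreover have "xs!Suc 0 = r" using xs(5) xs(3) \<open>length xs = 2\<close> by (simp add: last_conv_nth)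
    ultimately show False by simp
  qed
  have "is_cycle E xs"
    unfolding is_cycle_def
  proof (intro conjI allI impI)
    show "3 \<le> length xs" by (rule l3)
    show "distinct xs" by (rule xs(2))
    fix i assume i: "i < length xs"
    show "{xs ! i, xs ! ((i + 1) mod length xs)} \<in> E"
    proof (cases "Suc i < length xs")
      case True
      then show ?thesis using walk_nth[OF xs(1) True] by simp
    next
      case False
      then have ii: "i = length xs - 1" using i by simp
      have "xs ! i = r" using xs(5) xs(3) ii by (simp add: last_conv_nth)
      moreover have "(i + 1) mod length xs = 0"
      proof -
        have "i + 1 = length xs" using ii l3 by simp
        then show ?thesis by simp
      qed
      moreover have "xs ! 0 = x" using xs(4) xs(3) by (simp add: hd_conv_nth)
      ultimately show ?thesis using e by (simp add: insert_commute)
    qed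
  qed
  then show False using ac unfolding acyclic_graph_def by blast
qed

lemma rf_parts:
  assumes "rooted_forest (V,E,R)"
  shows "is_graph V E" "acyclic_graph E" "R \<subseteq> V" "\<forall>v \<in> V. \<exists>!r. r \<in> R \<and> connected_in E v r"
proof -
  have h: "is_graph V E \<and> acyclic_graph E \<and> R \<subseteq> V \<and> (\<forall>v \<in> V. \<exists>!r. r \<in> R \<and> connected_in E v r)"
    using assms by (rule iffD1[OF rf3])
  show "is_graph V E" using h by (rule conjunct1)
  show "acyclic_graph E" using h by (rule conjunct1[OF conjunct2])
  show "R \<subseteq> V" using h by (rule conjunct1[OF conjunct2[OF conjunct2]])
  show "\<forall>v \<in> V. \<exists>!r. r \<in> R \<and> connected_in E v r" using h by (rule conjunct2[OF conjunct2[OF conjunct2]])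
qed

lemma rf_intro:
  assumes "is_graph V E" "acyclic_graph E" "R \<subseteq> V" "\<forall>v \<in> V. \<exists>!r. r \<in> R \<and> connected_in E v r"
  shows "rooted_forest (V,E,R)"
  using assms by (intro iffD2[OF rf3] conjI)

lemma graph_mono: "is_graph V E \<Longrightarrow> E' \<subseteq> E \<Longrightarrow> is_graph V E'"
  unfolding is_graph_def by (meson subsetD)

lemma acyclic_mono: "acyclic_graph E \<Longrightarrow> E' \<subseteq> E \<Longrightarrow> acyclic_graph E'"
  unfolding acyclic_graph_def is_cycle_def by (meson subsetD)

lemma graph_edge_ex: assumes "is_graph V E" "e \<in> E" shows "\<exists>a b. e = {a,b} \<and> a \<in> V \<and> b \<in> V \<and> a \<noteq> b"
proof -
  have "\<forall>e\<in>E. \<exists>x y. x \<in> V \<and> y \<in> V \<and> x \<noteq> y \<and> e = {x, y}" using assms(1) unfolding is_graph_def by simp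
  then have "\<exists>x y. x \<in> V \<and> y \<in> V \<and> x \<noteq> y \<and> e = {x, y}" using assms(2) by (rule bspec)
  then obtain x y where "x \<in> V \<and> y \<in> V \<and> x \<noteq> y \<and> e = {x, y}" by (elim exE)
  then show ?thesis by (intro exI[of _ x] exI[of _ y]) simp
qed

lemma touch_root:
  assumes "connected_in E a t" "t \<in> R" "a \<notin> R"
  shows "\<exists>y z. {y,z} \<in> E \<and> z \<in> R"
proof -
  have "t \<in> R \<longrightarrow> (\<exists>y z. {y,z} \<in> E \<and> z \<in> R)"
    using assms(1) unfolding connected_in_def
  proof (induction rule: rtranclp_induct)
    case base then show ?case using assms(3) by simp
  next
    case (step y z)
    then show ?case by blast
  qed
  then show ?thesis using assms(2) by blast
qed

lemma rf_unique:
  assumes "rooted_forest (V,E,R)" "v \<in> V" "r1 \<in> R" "r2 \<in> R"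
    "connected_in E v r1" "connected_in E v r2"
  shows "r1 = r2"
proof -
  have "\<forall>v \<in> V. \<exists>!r. r \<in> R \<and> connected_in E v r" using rf_parts(4)[OF assms(1)] .
  then have "\<exists>!r. r \<in> R \<and> connected_in E v r" using assms(2) by (rule bspec)
  then show ?thesis using assms(3-6) by (elim ex1E) blast
qed

lemma conn_cons: "{v,w} \<in> E \<Longrightarrow> connected_in E w t \<Longrightarrow> connected_in E v t"
  using conn_trans conn_edge by metis

lemma conn_induct_conv:
  assumes "connected_in E a b" "P b" "\<And>v w. {v,w} \<in> E \<Longrightarrow> connected_in E w b \<Longrightarrow> P w \<Longrightarrow> P v"
  shows "P a"
  using assms(1) unfolding connected_in_def
proof (induction rule: converse_rtranclp_induct)
  case base then show ?case using assms(2) .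
next
  case (step y z)
  then show ?case using assms(3)[of y z] unfolding connected_in_def by blast
qed

lemma reach_new:
  assumes "connected_in E v t" "t \<in> R'" "r \<in> R'" "x \<in> R'"
  shows "\<exists>t'\<in>R'. connected_in (E - {{r,x}}) v t'"
  using assms(1)
proof (rule conn_induct_conv[where P="\<lambda>v. \<exists>t'\<in>R'. connected_in (E - {{r,x}}) v t'"])
  show "\<exists>t'\<in>R'. connected_in (E - {{r,x}}) t t'" using assms(2) conn_refl[of "E - {{r,x}}" t] by blast
next
  fix v w assume e: "{v,w} \<in> E" and ih: "\<exists>t'\<in>R'. connected_in (E - {{r,x}}) w t'"
  then obtain t' where t': "t' \<in> R'" "connected_in (E - {{r,x}}) w t'" by blast
  show "\<exists>t'\<in>R'. connected_in (E - {{r,x}}) v t'"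
  proof (cases "v \<in> R'")
    case True
    then show ?thesis using conn_refl[of "E - {{r,x}}" v] by blast
  next
    case False
    have "{v,w} \<noteq> {r,x}"
    proof
      assume eq: "{v,w} = {r,x}"
      have "v \<in> {v,w}" by simp
      then have "v \<in> {r,x}" by (simp only: eq)
      then have "v = r \<or> v = x" by simp
      then show False using False assms(3,4) by auto
    qed
    then have "{v,w} \<in> E - {{r,x}}" using e by simp
    then have "connected_in (E - {{r,x}}) v t'" using t'(2) by (rule conn_cons)
    then show ?thesis using t'(1) by blast
  qed
qed

lemma forest_step:
  assumes rf: "rooted_forest (V,E,R)" and ne: "E \<noteq> {}"
  shows "\<exists>r x. r \<in> R \<and> x \<in> V \<and> x \<notin> R \<and> {r,x} \<in> E \<and>
           rooted_forest (V, E - {{r,x}}, insert x R)"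
proof -
  have g: "is_graph V E" and ac: "acyclic_graph E" and RV: "R \<subseteq> V"
    and un: "\<forall>v \<in> V. \<exists>!r. r \<in> R \<and> connected_in E v r" using rf_parts[OF rf] by auto
  have ex_root: "\<exists>r. r \<in> R \<and> connected_in E v r" if "v \<in> V" for v
  proof -
    have "\<exists>!r. r \<in> R \<and> connected_in E v r" using un that by (rule bspec)
    then show ?thesis by (rule ex1_implies_ex)
  qed
  obtain e where e: "e \<in> E" using ne by blast
  then obtain a b where ab: "e = {a,b}" "a \<in> V" "b \<in> V" "a \<noteq> b"
    using graph_edge_ex[OF g e] by blast
  have "\<exists>y z. {y,z} \<in> E \<and> z \<in> R"
  proof (cases "a \<in> R")
    case True
    have "{b,a} \<in> E" using e ab(1) by (simp add: insert_commute)
    then show ?thesis using True by blast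
  next
    case False
    obtain t where "t \<in> R" "connected_in E a t" using ex_root[OF ab(2)] by blast
    then show ?thesis using touch_root[of E a t R] False by blast
  qed
  then obtain x r where xr: "{x,r} \<in> E" "r \<in> R" by blast
  have rx: "{r,x} \<in> E" using xr by (simp add: insert_commute)
  have xV: "x \<in> V" and xner: "x \<noteq> r" using graph_edge[OF g xr(1)] by auto
  have xnR: "x \<notin> R"
  proof
    assume xR: "x \<in> R"
    have "x = r" using rf_unique[OF rf xV xR xr(2) conn_refl conn_edge[OF xr(1)]] .
    then show False using xner by simp
  qed
  define E' where "E' = E - {{r,x}}"
  define R' where "R' = insert x R"
  have g': "is_graph V E'" using graph_mono[OF g] unfolding E'_def by blast
  have ac': "acyclic_graph E'" using acyclic_mono[OF ac] unfolding E'_def by blast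
  have R'V: "R' \<subseteq> V" using RV xV unfolding R'_def by blast
  have E'E: "E' \<subseteq> E" unfolding E'_def by blast
  have noroot: False if c: "connected_in E' x t" "t \<in> R" for t
  proof (cases "t = r")
    case True
    have "E' = E - {{x,r}}" unfolding E'_def by (simp add: insert_commute)
    then have "connected_in (E - {{x,r}}) x r" using c(1) True by simp
    then show False using no_cycle_conn[OF ac xr(1) xner] by blast
  next
    case False
    have "connected_in E x t" using conn_mono[OF E'E c(1)] .
    then have "t = r" using rf_unique[OF rf xV c(2) xr(2) _ conn_edge[OF xr(1)]] by blast
    then show False using False by simp
  qed
  have "\<forall>v \<in> V. \<exists>!t. t \<in> R' \<and> connected_in E' v t"
  proof
    fix v assume v: "v \<in> V"
    obtain t where t: "t \<in> R" "connected_in E v t" using ex_root[OF v] by blast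
    have ex: "\<exists>t'\<in>R'. connected_in E' v t'"
    proof -
      have "t \<in> R'" "r \<in> R'" "x \<in> R'" using t(1) xr(2) unfolding R'_def by auto
      then show ?thesis using reach_new[OF t(2), of R' r x] unfolding E'_def by blast
    qed
    have uq: "t1 = t2" if h: "t1 \<in> R'" "t2 \<in> R'" "connected_in E' v t1" "connected_in E' v t2"
      for t1 t2
    proof -
      have c12: "connected_in E' t1 t2" using conn_trans[OF conn_sym[OF h(3)] h(4)] .
      have c21: "connected_in E' t2 t1" using conn_sym[OF c12] .
      have t1V: "t1 \<in> V" using h(1) R'V by blast
      show ?thesis
      proof (cases "t1 = x")
        case True
        show ?thesis
        proof (cases "t2 = x")
          case False
          then have "t2 \<in> R" using h(2) unfolding R'_def by simp
          have "connected_in E' x t2" using c12 True by simp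
          then show ?thesis using noroot \<open>t2 \<in> R\<close> by blast
        next
          case True
          then show ?thesis using \<open>t1 = x\<close> by simp
        qed
      next
        case False
        then have t1R: "t1 \<in> R" using h(1) unfolding R'_def by simp
        show ?thesis
        proof (cases "t2 = x")
          case True
          have "connected_in E' x t1" using c21 True by simp
          then show ?thesis using noroot t1R by blast
        next
          case False
          then have t2R: "t2 \<in> R" using h(2) unfolding R'_def by simp
          have "connected_in E t1 t2" using conn_mono[OF E'E c12] .
          then show ?thesis using rf_unique[OF rf t1V t1R t2R conn_refl] by blast
        qed
      qed
    qed
    show "\<exists>!t. t \<in> R' \<and> connected_in E' v t"
    proof -
      obtain t' where "t' \<in> R'" "connected_in E' v t'" using ex by blast
      then show ?thesis using uq by (intro ex1I[of _ t']) blast+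
    qed
  qed
  then have "rooted_forest (V, E', R')" by (rule rf_intro[OF g' ac' R'V])
  then have "rooted_forest (V, E - {{r,x}}, insert x R)" unfolding E'_def R'_def .
  then show ?thesis using xr(2) xV xnR rx by blast
qed

lemma forest_noedge:
  assumes "rooted_forest (V,{},R)" shows "V = R"
proof -
  have RV: "R \<subseteq> V" using rf_parts(3)[OF assms] .
  have un: "\<forall>v \<in> V. \<exists>!r. r \<in> R \<and> connected_in {} v r" using rf_parts(4)[OF assms] .
  have "V \<subseteq> R"
  proof
    fix v assume v: "v \<in> V"
    have "\<exists>!r. r \<in> R \<and> connected_in {} v r" using un v by (rule bspec)
    from ex1_implies_ex[OF this] obtain r where r: "r \<in> R" "connected_in {} v r" by blast
    have "v = r" using conn_empty[OF r(2)] .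
    then show "v \<in> R" using r(1) by simp
  qed
  then show ?thesis using RV by (rule equalityI)
qed

lemma forest_card:
  "rooted_forest (V,E,R) \<Longrightarrow> card V = card E + card R"
proof (induction "card E" arbitrary: E R rule: less_induct)
  case less
  have g: "is_graph V E" using rf_parts(1)[OF less.prems] .
  have RV: "R \<subseteq> V" using rf_parts(3)[OF less.prems] .
  have fV: "finite V" using g unfolding is_graph_def by (rule conjunct1)
  have fE: "finite E" using graph_finite[OF g] .
  show ?case
  proof (cases "E = {}")
    case True
    have "V = R" using forest_noedge[of V R] less.prems True by simp
    then show ?thesis using True by simp
  next
    case False
    obtain r x where rx: "r \<in> R" "x \<in> V" "x \<notin> R" "{r,x} \<in> E"
      "rooted_forest (V, E - {{r,x}}, insert x R)"
      using forest_step[OF less.prems False] by blast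
    have pos: "card E > 0" using rx(4) fE by (auto simp: card_gt_0_iff)
    have c1: "card (E - {{r,x}}) = card E - 1" using rx(4) fE by simp
    have fR: "finite R" using finite_subset[OF RV fV] .
    have c2: "card (insert x R) = card R + 1" using rx(3) fR by simp
    have lt: "card (E - {{r,x}}) < card E" using c1 pos by linarith
    have "card V = card (E - {{r,x}}) + card (insert x R)" using less.hyps[OF lt rx(5)] .
    then show ?thesis using c1 c2 pos by linarith
  qed
qed

definition Inv :: "nat \<Rightarrow> (nat \<Rightarrow> nat) \<Rightarrow> nat \<Rightarrow> nat \<Rightarrow> bool" where
  "Inv l d p n \<longleftrightarrow> (\<forall>a<l. \<forall>b<l. a \<noteq> b \<longrightarrow> 2 * d a + d b \<le> p) \<and> (\<forall>a<l. 2 * d a \<le> p) \<and> (0 < n \<longrightarrow> n < p)"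

lemma sum_pair: "a < (l::nat) \<Longrightarrow> b < l \<Longrightarrow> a \<noteq> b \<Longrightarrow> d a + d b \<le> (\<Sum>c<l. (d c::nat))"
proof -
  assume h: "a < l" "b < l" "a \<noteq> b"
  have "sum d {a,b} \<le> sum d {..<l}" by (rule sum_mono2) (use h in auto)
  then show ?thesis using h by simp
qed

lemma sum_triple: "a < (l::nat) \<Longrightarrow> b < l \<Longrightarrow> c < l \<Longrightarrow> a \<noteq> b \<Longrightarrow> a \<noteq> c \<Longrightarrow> b \<noteq> c \<Longrightarrow>
   d a + d b + d c \<le> (\<Sum>c<l. (d c::nat))"
proof -
  assume h: "a < l" "b < l" "c < l" "a \<noteq> b" "a \<noteq> c" "b \<noteq> c"
  have "sum d {a,b,c} \<le> sum d {..<l}" by (rule sum_mono2) (use h in auto)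
  then show ?thesis using h by simp
qed

lemma sum_single: "a < (l::nat) \<Longrightarrow> d a \<le> (\<Sum>c<l. (d c::nat))"
  by (rule member_le_sum) auto

lemma sum_upd: "i < (l::nat) \<Longrightarrow> (\<Sum>c<l. (d(i := v)) c) + d i = (\<Sum>c<l. (d c::nat)) + v"
proof -
  assume i: "i < l"
  have "(\<Sum>c<l. (d(i := v)) c) = (d(i:=v)) i + (\<Sum>c\<in>{..<l} - {i}. (d(i := v)) c)"
    using i by (subst sum.remove[of _ i]) auto
  also have "(\<Sum>c\<in>{..<l} - {i}. (d(i := v)) c) = (\<Sum>c\<in>{..<l} - {i}. d c)"
    by (rule sum.cong) auto
  finally have 1: "(\<Sum>c<l. (d(i := v)) c) = v + (\<Sum>c\<in>{..<l} - {i}. d c)" by simp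
  have 2: "(\<Sum>c<l. d c) = d i + (\<Sum>c\<in>{..<l} - {i}. d c)"
    using i by (subst sum.remove[of _ i]) auto
  show ?thesis using 1 2 by simp
qed

lemma sum_only: "i < (l::nat) \<Longrightarrow> (\<forall>a<l. a \<noteq> i \<longrightarrow> d a = 0) \<Longrightarrow> (\<Sum>c<l. (d c::nat)) = d i"
proof -
  assume i: "i < l" and z: "\<forall>a<l. a \<noteq> i \<longrightarrow> d a = 0"
  have "(\<Sum>c<l. d c) = d i + (\<Sum>c\<in>{..<l} - {i}. d c)"
    using i by (subst sum.remove[of _ i]) auto
  also have "(\<Sum>c\<in>{..<l} - {i}. d c) = 0" using z by (intro sum.neutral) auto
  finally show ?thesis by simp
qed

lemma LB:
  assumes i: "i < l" and pos: "0 < d i" and z: "\<forall>a<l. a \<noteq> i \<longrightarrow> d a = 0"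
    and inv: "Inv l d p n" and n: "n = (\<Sum>c<l. d c)"
  shows "2 \<le> p \<and> Inv l (d(i := d i - 1)) (p - 2) (n - 1)"
proof -
  have P: "\<And>a b. a < l \<Longrightarrow> b < l \<Longrightarrow> a \<noteq> b \<Longrightarrow> 2 * d a + d b \<le> p"
    and Q: "\<And>a. a < l \<Longrightarrow> 2 * d a \<le> p" and N: "0 < n \<Longrightarrow> n < p"
    using inv unfolding Inv_def by auto
  have ni: "n = d i" using sum_only[OF i z] n by simp
  have Qi: "2 * d i \<le> p" using Q[OF i] .
  show ?thesis unfolding Inv_def
  proof (intro conjI allI impI)
    show "2 \<le> p" using Qi pos by linarith
    fix a b assume ab: "a < l" "b < l" "a \<noteq> b"
    show "2 * (d(i := d i - 1)) a + (d(i := d i - 1)) b \<le> p - 2"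
    proof (cases "a = i")
      case True
      then have "b \<noteq> i" using ab by simp
      then have "d b = 0" using z ab by simp
      then show ?thesis using True \<open>b \<noteq> i\<close> Qi pos by simp
    next
      case False
      then have "d a = 0" using z ab by simp
      show ?thesis
      proof (cases "b = i")
        case True
        then show ?thesis using False \<open>d a = 0\<close> Qi pos by (simp; arith)
      next
        case bi: False
        then have "d b = 0" using z ab by simp
        then show ?thesis using False bi \<open>d a = 0\<close> by simp
      qed
    qed
  next
    fix a assume a: "a < l"
    show "2 * (d(i := d i - 1)) a \<le> p - 2"
      using z a Qi pos by (cases "a = i") auto
  next
    assume "0 < n - 1"
    then show "n - 1 < p - 2" using ni Qi by linarith
  qed
qed

lemma LA:
  assumes i: "i < l" and j: "j < l" and ij: "i \<noteq> j"
    and mi: "\<forall>a<l. d a \<le> d i" and mj: "\<forall>a<l. a \<noteq> i \<longrightarrow> d a \<le> d j" and pj: "0 < d j"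
    and cs: "d j = d i \<or> (\<forall>k<l. k \<noteq> i \<longrightarrow> k \<noteq> j \<longrightarrow> d k = 0)"
    and inv: "Inv l d p n" and n: "n = (\<Sum>c<l. d c)"
  shows "1 \<le> p \<and> Inv l (d(i := d i - 1)) (p - 1) (n - 1) \<and> Inv l (d(j := d j - 1)) (p - 1) (n - 1)"
proof -
  have P: "\<And>a b. a < l \<Longrightarrow> b < l \<Longrightarrow> a \<noteq> b \<Longrightarrow> 2 * d a + d b \<le> p"
    and Q: "\<And>a. a < l \<Longrightarrow> 2 * d a \<le> p" and N: "0 < n \<Longrightarrow> n < p"
    using inv unfolding Inv_def by auto
  have S2: "\<And>a b. a < l \<Longrightarrow> b < l \<Longrightarrow> a \<noteq> b \<Longrightarrow> d a + d b \<le> n"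
    using sum_pair n by metis
  have S3: "\<And>a b c. a < l \<Longrightarrow> b < l \<Longrightarrow> c < l \<Longrightarrow> a \<noteq> b \<Longrightarrow> a \<noteq> c \<Longrightarrow> b \<noteq> c \<Longrightarrow> d a + d b + d c \<le> n"
    using sum_triple n by metis
  have nij: "d i + d j \<le> n" using S2[OF i j ij] .
  have np: "n < p" using N nij pj by linarith
  have Pij: "2 * d i + d j \<le> p" using P[OF i j ij] .
  have di: "d j \<le> d i" using mi j by simp
  have pi: "0 < d i" using di pj by linarith
  have A1: "Inv l (d(i := d i - 1)) (p - 1) (n - 1)"
    unfolding Inv_def
  proof (intro conjI allI impI)
    fix a b assume ab: "a < l" "b < l" "a \<noteq> b"
    show "2 * (d(i := d i - 1)) a + (d(i := d i - 1)) b \<le> p - 1"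
    proof (cases "a = i")
      case True
      then show ?thesis using P[OF ab] ab di pj by (simp; arith)
    next
      case a: False
      show ?thesis
      proof (cases "b = i")
        case True
        then show ?thesis using P[OF ab] a pi by (simp; arith)
      next
        case False
        have "d a + d b + d i \<le> n" using S3[OF ab(1,2) i ab(3) a False] .
        moreover have "d a \<le> d i" using mi ab by simp
        ultimately show ?thesis using a False np by (simp; arith)
      qed
    qed
  next
    fix a assume a: "a < l"
    show "2 * (d(i := d i - 1)) a \<le> p - 1"
    proof (cases "a = i")
      case True
      then show ?thesis using Q[OF i] di pj by (simp; arith)
    next
      case False
      have "d a + d i \<le> n" using S2[OF a i False] .
      moreover have "d a \<le> d i" using mi a by simp
      ultimately show ?thesis using False np by (simp; arith)
    qed
  next
    assume "0 < n - 1" then show "n - 1 < p - 1" using np by linarith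
  qed
  have A2: "Inv l (d(j := d j - 1)) (p - 1) (n - 1)"
    unfolding Inv_def
  proof (intro conjI allI impI)
    fix a b assume ab: "a < l" "b < l" "a \<noteq> b"
    show "2 * (d(j := d j - 1)) a + (d(j := d j - 1)) b \<le> p - 1"
    proof (cases "a = j")
      case True
      then show ?thesis using P[OF ab] ab pj by (simp; arith)
    next
      case aj: False
      show ?thesis
      proof (cases "b = j")
        case True
        then show ?thesis using P[OF ab] aj pj by (simp; arith)
      next
        case bj: False
        show ?thesis
        proof (cases "a = i")
          case ai: True
          then have bi: "b \<noteq> i" using ab by simp
          have "2 * d i + d b \<le> p - 1"
          proof (cases "d j = d i")
            case True
            have "d i + d j + d b \<le> n" using S3[OF i j ab(2) ij] bi bj by (simp; arith)
            then show ?thesis using True np by linarith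
          next
            case False
            then have "d b = 0" using cs ab bi bj by (simp; arith)
            then show ?thesis using Pij pj by linarith
          qed
          then show ?thesis using ai aj bj by (simp; arith)
        next
          case ai: False
          show ?thesis
          proof (cases "b = i")
            case bi: True
            have "2 * d a + d i \<le> p - 1"
            proof (cases "d j = d i")
              case True
              have "d a + d j + d i \<le> n" using S3[OF ab(1) j i aj ai ij[symmetric]] .
              moreover have "d a \<le> d j" using mj ab ai by simp
              ultimately show ?thesis using np by linarith
            next
              case False
              then have "d a = 0" using cs ab ai aj by (simp; arith)
              then show ?thesis using nij np pj by linarith
            qed
            then show ?thesis using bi aj ai ij by (simp; arith)
          next
            case bi: False
            have "d a + d b + d i \<le> n" using S3[OF ab(1,2) i ab(3) ai bi] .
            moreover have "d a \<le> d i" using mi ab by simp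
            ultimately show ?thesis using aj bj np by (simp; arith)
          qed
        qed
      qed
    qed
  next
    fix a assume a: "a < l"
    show "2 * (d(j := d j - 1)) a \<le> p - 1"
    proof (cases "a = j")
      case True
      then show ?thesis using Q[OF j] pj by (simp; arith)
    next
      case aj: False
      show ?thesis
      proof (cases "a = i")
        case True
        then show ?thesis using Pij pj aj by (simp; arith)
      next
        case False
        have "d a + d i \<le> n" using S2[OF a i False] .
        moreover have "d a \<le> d i" using mi a by simp
        ultimately show ?thesis using aj np by (simp; arith)
      qed
    qed
  next
    assume "0 < n - 1" then show "n - 1 < p - 1" using np by linarith
  qed
  show ?thesis using A1 A2 np by (simp; arith)
qed

lemma LM:
  assumes i: "i < l" and y: "y < l" and iy: "i \<noteq> y"
    and mi: "\<forall>a<l. a \<noteq> i \<longrightarrow> d a < d i" and py: "0 < d y"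
    and inv: "Inv l d p n" and n: "n = (\<Sum>c<l. d c)"
  shows "2 \<le> p \<and> Inv l (d(i := d i - 1, y := d y - 1)) (p - 2) (n - 2)"
proof -
  have P: "\<And>a b. a < l \<Longrightarrow> b < l \<Longrightarrow> a \<noteq> b \<Longrightarrow> 2 * d a + d b \<le> p"
    and Q: "\<And>a. a < l \<Longrightarrow> 2 * d a \<le> p" and N: "0 < n \<Longrightarrow> n < p"
    using inv unfolding Inv_def by auto
  have S2: "\<And>a b. a < l \<Longrightarrow> b < l \<Longrightarrow> a \<noteq> b \<Longrightarrow> d a + d b \<le> n"
    using sum_pair n by metis
  have S3: "\<And>a b c. a < l \<Longrightarrow> b < l \<Longrightarrow> c < l \<Longrightarrow> a \<noteq> b \<Longrightarrow> a \<noteq> c \<Longrightarrow> b \<noteq> c \<Longrightarrow> d a + d b + d c \<le> n"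
    using sum_triple n by metis
  have yi: "d y < d i" using mi y iy by auto
  have niy: "d i + d y \<le> n" using S2[OF i y iy] .
  have np: "n < p" using N niy py by linarith
  have Qi: "2 * d i \<le> p" using Q[OF i] .
  have Qy: "2 * d y \<le> p" using Q[OF y] .
  let ?d = "d(i := d i - 1, y := d y - 1)"
  have dd: "\<And>a. ?d a = (if a = y then d y - 1 else if a = i then d i - 1 else d a)" by simp
  have "Inv l ?d (p - 2) (n - 2)"
    unfolding Inv_def
  proof (intro conjI allI impI)
    fix a b assume ab: "a < l" "b < l" "a \<noteq> b"
    show "2 * ?d a + ?d b \<le> p - 2"
    proof (cases "a = i")
      case ai: True
      have "?d b \<le> d b" by (simp add: dd)
      moreover have "?d a = d i - 1" using ai iy by simp
      moreover have "2 * d i + d b \<le> p" using P[OF ab] ai by simp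
      ultimately show ?thesis using yi by linarith
    next
      case ai: False
      show ?thesis
      proof (cases "a = y")
        case ay: True
        have "?d b \<le> d b" by (simp add: dd)
        moreover have "?d a = d y - 1" using ay by simp
        moreover have "2 * d y + d b \<le> p" using P[OF ab] ay by simp
        ultimately show ?thesis using py by linarith
      next
        case ay: False
        have da: "d a < d i" using mi ab ai by auto
        have dA: "?d a = d a" using ai ay by simp
        show ?thesis
        proof (cases "b = i")
          case bi: True
          have "?d b = d i - 1" using bi iy by simp
          moreover have "2 * d i + d a \<le> p" using P[OF i ab(1)] ai by auto
          ultimately show ?thesis using dA da by linarith
        next
          case bi: False
          show ?thesis
          proof (cases "b = y")
            case yb: True
            have "?d b = d y - 1" using yb by simp
            moreover have "d a + d i + d y \<le> n" using S3[OF ab(1) i y ai ay iy] .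
            ultimately show ?thesis using dA da np py by linarith
          next
            case yb: False
            have "?d b = d b" using bi yb by simp
            moreover have "d a + d b + d i \<le> n" using S3[OF ab(1,2) i ab(3) ai bi] .
            ultimately show ?thesis using dA da np by linarith
          qed
        qed
      qed
    qed
  next
    fix a assume a: "a < l"
    show "2 * ?d a \<le> p - 2"
    proof (cases "a = i")
      case True
      then have "?d a = d i - 1" using iy by simp
      then show ?thesis using Qi yi by linarith
    next
      case ai: False
      show ?thesis
      proof (cases "a = y")
        case True
        then have "?d a = d y - 1" by simp
        then show ?thesis using Qy py by linarith
      next
        case False
        have "?d a = d a" using ai False by simp
        moreover have "d a < d i" using mi a ai by auto
        moreover have "d a + d i + d y \<le> n" using S3[OF a i y ai False iy] .
        ultimately show ?thesis using np py by linarith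
      qed
    qed
  next
    assume "0 < n - 2" then show "n - 2 < p - 2" using np by linarith
  qed
  moreover have "2 \<le> p" using Qi yi by linarith
  ultimately show ?thesis by simp
qed

definition USet :: "'a rforest list \<Rightarrow> (nat \<Rightarrow> 'a set) \<Rightarrow> 'a set" where
  "USet Fs S = (\<Union>i<length Fs. S i)"

definition inv_forests :: "'a rforest list \<Rightarrow> (nat \<Rightarrow> 'a set set) \<Rightarrow> (nat \<Rightarrow> 'a set) \<Rightarrow> bool" where
  "inv_forests Fs D S \<longleftrightarrow> (\<forall>i<length Fs. D i \<subseteq> fE (Fs!i) \<and> fR (Fs!i) \<subseteq> S i \<and>
     rooted_forest (fV (Fs!i), fE (Fs!i) - D i, S i) \<and> (\<forall>e\<in>D i. e \<subseteq> S i) \<and>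
     (\<forall>y\<in>S i - fR (Fs!i). \<exists>e\<in>D i. y \<in> e))"

definition inv_map :: "'a rforest list \<Rightarrow> 'b set \<Rightarrow> ('a \<Rightarrow> 'b) \<Rightarrow> (nat \<Rightarrow> 'a set) \<Rightarrow> ('a \<Rightarrow> 'b) \<Rightarrow> bool" where
  "inv_map Fs VB \<phi> S f \<longleftrightarrow> inj_on f (USet Fs S) \<and> f ` USet Fs S \<subseteq> VB \<and> (\<forall>r\<in>tuple_roots Fs. f r = \<phi> r)"

definition inv_red :: "'a rforest list \<Rightarrow> (nat \<Rightarrow> 'a set set) \<Rightarrow> ('a \<Rightarrow> 'b) \<Rightarrow> 'b set set \<Rightarrow> bool" where
  "inv_red Fs D f R \<longleftrightarrow> R = (\<Union>i<length Fs. (\<lambda>e. f ` e) ` D i)"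

definition inv_rootsfree :: "'a rforest list \<Rightarrow> ('a \<Rightarrow> 'b) \<Rightarrow> 'b set set \<Rightarrow> bool" where
  "inv_rootsfree Fs \<phi> C \<longleftrightarrow> (\<forall>r1\<in>tuple_roots Fs. \<forall>r2\<in>tuple_roots Fs. r1 \<noteq> r2 \<longrightarrow> {\<phi> r1, \<phi> r2} \<notin> C)"

definition blue_ok :: "'a rforest list \<Rightarrow> 'b set \<Rightarrow> (nat \<Rightarrow> 'a set) \<Rightarrow> ('a \<Rightarrow> 'b) \<Rightarrow> 'b set \<Rightarrow> bool" where
  "blue_ok Fs VB S f b \<longleftrightarrow>
     (\<exists>i<length Fs. \<exists>j<length Fs. \<exists>a\<in>S i. \<exists>c\<in>S j. i \<noteq> j \<and> b = {f a, f c}) \<or>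
     (\<exists>i<length Fs. \<exists>a\<in>S i. \<exists>w. a \<notin> leaves (Fs!i) \<and> w \<notin> f ` USet Fs S \<and> w \<in> VB \<and> b = {f a, w})"

definition inv_blue :: "'a rforest list \<Rightarrow> 'b set \<Rightarrow> (nat \<Rightarrow> 'a set) \<Rightarrow> ('a \<Rightarrow> 'b) \<Rightarrow> 'b set set \<Rightarrow> bool" where
  "inv_blue Fs VB S f Bl \<longleftrightarrow> (\<forall>b\<in>Bl. blue_ok Fs VB S f b)"

definition inv_ni :: "'a rforest list \<Rightarrow> (nat \<Rightarrow> 'a set) \<Rightarrow> ('a \<Rightarrow> 'b) \<Rightarrow> 'b set set \<Rightarrow> bool" where
  "inv_ni Fs S f C \<longleftrightarrow> (\<forall>w. w \<notin> f ` USet Fs S \<longrightarrow> (\<forall>e\<in>C. \<forall>e'\<in>C. w \<in> e \<longrightarrow> w \<in> e' \<longrightarrow> e = e'))"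

definition inv_st where
  "inv_st Fs VB \<phi> D S f R Bl \<longleftrightarrow> inv_forests Fs D S \<and> inv_map Fs VB \<phi> S f \<and> inv_red Fs D f R \<and>
     inv_rootsfree Fs \<phi> (R \<union> Bl) \<and> inv_blue Fs VB S f Bl \<and> inv_ni Fs S f (R \<union> Bl)"

definition pool :: "'a rforest list \<Rightarrow> 'b set \<Rightarrow> (nat \<Rightarrow> 'a set) \<Rightarrow> ('a \<Rightarrow> 'b) \<Rightarrow> 'b set set \<Rightarrow> 'b set" where
  "pool Fs VB S f C = {v \<in> VB. v \<notin> f ` USet Fs S \<and> (\<forall>e\<in>C. v \<notin> e)}"

lemma rforest_eta: "F = (fV F, fE F, fR F)"
  by (simp add: fV_def fE_def fR_def)

lemma rft_rf: "rooted_forest_tuple Fs \<Longrightarrow> i < length Fs \<Longrightarrow> rooted_forest (fV (Fs!i), fE (Fs!i), fR (Fs!i))"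
proof -
  assume h: "rooted_forest_tuple Fs" "i < length Fs"
  have "Fs ! i \<in> set Fs" using h(2) by simp
  then have "rooted_forest (Fs!i)" using h(1) unfolding rooted_forest_tuple_def by blast
  then show ?thesis using rforest_eta[of "Fs!i"] by simp
qed

lemma rft_disj: "rooted_forest_tuple Fs \<Longrightarrow> i < length Fs \<Longrightarrow> j < length Fs \<Longrightarrow> i \<noteq> j \<Longrightarrow>
   fV (Fs!i) \<inter> fV (Fs!j) = {}"
  unfolding rooted_forest_tuple_def by blast

lemma rft_disj_mem: "rooted_forest_tuple Fs \<Longrightarrow> i < length Fs \<Longrightarrow> j < length Fs \<Longrightarrow>
   x \<in> fV (Fs!i) \<Longrightarrow> x \<in> fV (Fs!j) \<Longrightarrow> i = j"
  using rft_disj by blast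

lemma UN_set_nth: "(\<Union>F\<in>set Fs. g F) = (\<Union>i<length Fs. g (Fs!i))"
proof
  show "(\<Union>F\<in>set Fs. g F) \<subseteq> (\<Union>i<length Fs. g (Fs!i))"
  proof
    fix x assume "x \<in> (\<Union>F\<in>set Fs. g F)"
    then obtain F where F: "F \<in> set Fs" "x \<in> g F" by blast
    then obtain i where "i < length Fs" "Fs!i = F" by (auto simp: in_set_conv_nth)
    then show "x \<in> (\<Union>i<length Fs. g (Fs!i))" using F by blast
  qed
next
  show "(\<Union>i<length Fs. g (Fs!i)) \<subseteq> (\<Union>F\<in>set Fs. g F)"
  proof
    fix x assume "x \<in> (\<Union>i<length Fs. g (Fs!i))"
    then obtain i where i: "i < length Fs" "x \<in> g (Fs!i)" by blast
    then have "Fs!i \<in> set Fs" by simp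
    then show "x \<in> (\<Union>F\<in>set Fs. g F)" using i(2) by blast
  qed
qed

lemma tuple_roots_conv: "tuple_roots Fs = (\<Union>i<length Fs. fR (Fs!i))"
  unfolding tuple_roots_def by (rule UN_set_nth)
lemma tuple_verts_conv: "tuple_verts Fs = (\<Union>i<length Fs. fV (Fs!i))"
  unfolding tuple_verts_def by (rule UN_set_nth)
lemma tuple_leaves_conv: "tuple_leaves Fs = (\<Union>i<length Fs. leaves (Fs!i))"
  unfolding tuple_leaves_def by (rule UN_set_nth)

lemma invF: "inv_forests Fs D S \<Longrightarrow> i < length Fs \<Longrightarrow> D i \<subseteq> fE (Fs!i) \<and> fR (Fs!i) \<subseteq> S i \<and>
     rooted_forest (fV (Fs!i), fE (Fs!i) - D i, S i) \<and> (\<forall>e\<in>D i. e \<subseteq> S i) \<and>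
     (\<forall>y\<in>S i - fR (Fs!i). \<exists>e\<in>D i. y \<in> e)"
  unfolding inv_forests_def by blast

lemma invF_SV: "inv_forests Fs D S \<Longrightarrow> i < length Fs \<Longrightarrow> S i \<subseteq> fV (Fs!i)"
  using invF rf_parts(3) by metis

lemma USet_mem: "i < length Fs \<Longrightarrow> x \<in> S i \<Longrightarrow> x \<in> USet Fs S"
  unfolding USet_def by blast

lemma USet_upd: "i < length Fs \<Longrightarrow> USet Fs (S(i := insert x (S i))) = insert x (USet Fs S)"
  unfolding USet_def by (auto split: if_splits)

lemma notin_USet:
  assumes "rooted_forest_tuple Fs" "inv_forests Fs D S" "i < length Fs" "x \<in> fV (Fs!i)" "x \<notin> S i"
  shows "x \<notin> USet Fs S"
proof
  assume "x \<in> USet Fs S"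
  then obtain a where a: "a < length Fs" "x \<in> S a" unfolding USet_def by blast
  then have "x \<in> fV (Fs!a)" using invF_SV[OF assms(2) a(1)] by blast
  then have "a = i" using rft_disj_mem[OF assms(1) a(1) assms(3)] assms(4) by blast
  then show False using a(2) assms(5) by simp
qed

lemma roots_in_USet: "inv_forests Fs D S \<Longrightarrow> r \<in> tuple_roots Fs \<Longrightarrow> r \<in> USet Fs S"
proof -
  assume h: "inv_forests Fs D S" "r \<in> tuple_roots Fs"
  then obtain i where i: "i < length Fs" "r \<in> fR (Fs!i)" unfolding tuple_roots_conv by blast
  then have "r \<in> S i" using invF[OF h(1) i(1)] by blast
  then show ?thesis using USet_mem[OF i(1)] by blast
qed

lemma UN_upd_insert: "i < (l::nat) \<Longrightarrow> (\<Union>a<l. (G(i := insert c (G i))) a) = insert c (\<Union>a<l. G a)"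
  by (auto split: if_splits)

lemma emb_step:
  assumes RFT: "rooted_forest_tuple Fs"
    and inv: "inv_st Fs VB \<phi> D S f R Bl"
    and i: "i < length Fs" and p: "p \<in> S i" and xV: "x \<in> fV (Fs!i)" and xS: "x \<notin> S i"
    and e: "{p,x} \<in> fE (Fs!i) - D i"
    and rf': "rooted_forest (fV (Fs!i), fE (Fs!i) - D i - {{p,x}}, insert x (S i))"
    and u: "u \<in> pool Fs VB S f (R \<union> Bl)"
  shows "inv_st Fs VB \<phi> (D(i := insert {p,x} (D i))) (S(i := insert x (S i))) (f(x := u)) (insert {f p, u} R) Bl
    \<and> pool Fs VB (S(i := insert x (S i))) (f(x := u)) (insert {f p, u} R \<union> Bl) = pool Fs VB S f (R \<union> Bl) - {u}"
proof -
  define D' where "D' = D(i := insert {p,x} (D i))"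
  define S' where "S' = S(i := insert x (S i))"
  define f' where "f' = f(x := u)"
  define R' where "R' = insert {f p, u} R"
  have F: "inv_forests Fs D S" and M: "inv_map Fs VB \<phi> S f" and Rd: "inv_red Fs D f R"
    and RF: "inv_rootsfree Fs \<phi> (R \<union> Bl)" and B: "inv_blue Fs VB S f Bl" and N: "inv_ni Fs S f (R \<union> Bl)"
    using inv unfolding inv_st_def by auto
  have xU: "x \<notin> USet Fs S" using notin_USet[OF RFT F i xV xS] .
  have U': "USet Fs S' = insert x (USet Fs S)" unfolding S'_def using USet_upd[OF i] .
  have fU: "f' z = f z" if "z \<in> USet Fs S" for z using that xU unfolding f'_def by auto
  have uVB: "u \<in> VB" and uimg: "u \<notin> f ` USet Fs S" and ufree: "\<forall>e\<in>R \<union> Bl. u \<notin> e"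
    using u unfolding pool_def by auto
  have imgU: "f' ` USet Fs S = f ` USet Fs S" using fU by (rule image_cong[OF refl])
  have fx: "f' x = u" by (simp add: f'_def)
  have img': "f' ` USet Fs S' = insert u (f ` USet Fs S)"
    unfolding U' image_insert imgU fx ..
  have pU: "p \<in> USet Fs S" using USet_mem[where S=S, OF i p] .
  have fp: "f' p = f p" using fU[OF pU] .
  have fpimg: "f p \<in> f ` USet Fs S" using pU by blast
  have inj: "inj_on f (USet Fs S)" and fVB: "f ` USet Fs S \<subseteq> VB" and froot: "\<forall>r\<in>tuple_roots Fs. f r = \<phi> r"
    using M unfolding inv_map_def by auto
  have Fi: "D i \<subseteq> fE (Fs!i)" "fR (Fs!i) \<subseteq> S i" "\<forall>e\<in>D i. e \<subseteq> S i" "\<forall>y\<in>S i - fR (Fs!i). \<exists>e\<in>D i. y \<in> e"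
    using invF[OF F i] by auto
  have F': "inv_forests Fs D' S'"
    unfolding inv_forests_def
  proof (intro allI impI)
    fix a assume a: "a < length Fs"
    show "D' a \<subseteq> fE (Fs!a) \<and> fR (Fs!a) \<subseteq> S' a \<and>
     rooted_forest (fV (Fs!a), fE (Fs!a) - D' a, S' a) \<and> (\<forall>e\<in>D' a. e \<subseteq> S' a) \<and>
     (\<forall>y\<in>S' a - fR (Fs!a). \<exists>e\<in>D' a. y \<in> e)"
    proof (cases "a = i")
      case False
      then show ?thesis using invF[OF F a] unfolding D'_def S'_def by simp
    next
      case True
      have "fE (Fs!i) - insert {p,x} (D i) = fE (Fs!i) - D i - {{p,x}}" by blast
      then have r: "rooted_forest (fV (Fs!i), fE (Fs!i) - D' i, S' i)" using rf' unfolding D'_def S'_def by simp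
      have c1: "D' i \<subseteq> fE (Fs!i)" using Fi(1) e unfolding D'_def by simp
      have c2: "fR (Fs!i) \<subseteq> S' i" using Fi(2) unfolding S'_def by auto
      have c3: "\<forall>e\<in>D' i. e \<subseteq> S' i" using Fi(3) p unfolding D'_def S'_def by auto
      have c4: "\<forall>y\<in>S' i - fR (Fs!i). \<exists>e\<in>D' i. y \<in> e"
      proof
        fix y assume y: "y \<in> S' i - fR (Fs!i)"
        show "\<exists>e\<in>D' i. y \<in> e"
        proof (cases "y = x")
          case True
          then show ?thesis unfolding D'_def by simp
        next
          case False
          then have "y \<in> S i - fR (Fs!i)" using y unfolding S'_def by simp
          then obtain e where "e \<in> D i" "y \<in> e" using Fi(4) by blast
          then show ?thesis unfolding D'_def by auto
        qed
      qed
      show ?thesis using True c1 c2 c3 c4 r by blast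
    qed
  qed
  have M': "inv_map Fs VB \<phi> S' f'"
    unfolding inv_map_def
  proof (intro conjI)
    have "inj_on f' (USet Fs S)" using inj fU inj_on_cong by blast
    moreover have "f' x \<notin> f' ` (USet Fs S)" using imgU uimg by (simp add: f'_def)
    ultimately have "inj_on f' (insert x (USet Fs S))" using xU by simp
    then show "inj_on f' (USet Fs S')" using U' by simp
    show "f' ` USet Fs S' \<subseteq> VB" using img' fVB uVB by simp
    show "\<forall>r\<in>tuple_roots Fs. f' r = \<phi> r"
    proof
      fix r assume r: "r \<in> tuple_roots Fs"
      have "r \<in> USet Fs S" using roots_in_USet[OF F r] .
      then show "f' r = \<phi> r" using fU froot r by simp
    qed
  qed
  have Rd': "inv_red Fs D' f' R'"
    unfolding inv_red_def
  proof -
    have eq: "(\<lambda>e. f' ` e) ` D a = (\<lambda>e. f ` e) ` D a" if a: "a < length Fs" for a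
    proof (rule image_cong[OF refl])
      fix e assume "e \<in> D a"
      then have "e \<subseteq> S a" using invF[OF F a] by blast
      then have "e \<subseteq> USet Fs S" using USet_mem[where S=S, OF a] by blast
      then show "f' ` e = f ` e" using fU by (intro image_cong[OF refl]) blast
    qed
    have px: "f' ` {p,x} = {f p, u}" by (simp only: image_insert image_empty fp fx)
    have "(\<lambda>a. (\<lambda>e. f' ` e) ` D' a) = (\<lambda>a. if a = i then insert {f p, u} ((\<lambda>e. f' ` e) ` D i) else (\<lambda>e. f' ` e) ` D a)"
    proof (rule ext)
      fix a
      show "(\<lambda>e. f' ` e) ` D' a = (if a = i then insert {f p, u} ((\<lambda>e. f' ` e) ` D i) else (\<lambda>e. f' ` e) ` D a)"
      proof (cases "a = i")
        case True
        have "(\<lambda>e. f' ` e) ` D' a = (\<lambda>e. f' ` e) ` insert {p,x} (D i)" unfolding D'_def using True by simp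
        also have "\<dots> = insert (f' ` {p,x}) ((\<lambda>e. f' ` e) ` D i)" by (rule image_insert)
        also have "\<dots> = insert {f p, u} ((\<lambda>e. f' ` e) ` D i)" by (simp only: px)
        finally show ?thesis using True by simp
      next
        case False
        then show ?thesis unfolding D'_def by simp
      qed
    qed
    note fe = this
    define G where "G = (\<lambda>a. (\<lambda>e. f ` e) ` D a)"
    have pw: "(\<lambda>e. f' ` e) ` D' a = (G(i := insert {f p, u} (G i))) a" if a: "a < length Fs" for a
    proof -
      have "(\<lambda>e. f' ` e) ` D' a = (if a = i then insert {f p, u} ((\<lambda>e. f' ` e) ` D i) else (\<lambda>e. f' ` e) ` D a)"
        using fun_cong[OF fe, of a] by simp
      then show ?thesis using eq[OF a] eq[OF i] unfolding G_def by simp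
    qed
    have "(\<Union>a<length Fs. (\<lambda>e. f' ` e) ` D' a) = (\<Union>a<length Fs. (G(i := insert {f p, u} (G i))) a)"
      by (rule SUP_cong[OF refl]) (simp add: pw)
    also have "\<dots> = insert {f p, u} (\<Union>a<length Fs. G a)" using UN_upd_insert[OF i] .
    also have "\<dots> = insert {f p, u} (\<Union>a<length Fs. (\<lambda>e. f ` e) ` D a)" unfolding G_def ..

    also have "\<dots> = R'" using Rd unfolding inv_red_def R'_def by simp
    finally show "R' = (\<Union>a<length Fs. (\<lambda>e. f' ` e) ` D' a)" by simp
  qed
  have RF': "inv_rootsfree Fs \<phi> (R' \<union> Bl)"
    unfolding inv_rootsfree_def
  proof (intro ballI impI)
    fix r1 r2 assume r: "r1 \<in> tuple_roots Fs" "r2 \<in> tuple_roots Fs" "r1 \<noteq> r2"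
    have old: "{\<phi> r1, \<phi> r2} \<notin> R \<union> Bl" using RF r unfolding inv_rootsfree_def by blast
    have "\<phi> r1 \<in> f ` USet Fs S" using roots_in_USet[OF F r(1)] froot r(1) by force
    moreover have "\<phi> r2 \<in> f ` USet Fs S" using roots_in_USet[OF F r(2)] froot r(2) by force
    ultimately have "u \<notin> {\<phi> r1, \<phi> r2}" using uimg by blast
    then have "{\<phi> r1, \<phi> r2} \<noteq> {f p, u}" by blast
    then show "{\<phi> r1, \<phi> r2} \<notin> R' \<union> Bl" using old unfolding R'_def by blast
  qed
  have B': "inv_blue Fs VB S' f' Bl"
    unfolding inv_blue_def
  proof
    fix b assume b: "b \<in> Bl"
    have ok: "blue_ok Fs VB S f b" using B b unfolding inv_blue_def by blast
    have sub: "\<And>a. S a \<subseteq> S' a" unfolding S'_def by auto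
    show "blue_ok Fs VB S' f' b"
    proof (cases "\<exists>i1<length Fs. \<exists>j1<length Fs. \<exists>a\<in>S i1. \<exists>c\<in>S j1. i1 \<noteq> j1 \<and> b = {f a, f c}")
      case True
      then obtain i1 j1 a c where h: "i1 < length Fs" "j1 < length Fs" "a \<in> S i1" "c \<in> S j1" "i1 \<noteq> j1" "b = {f a, f c}"
        by blast
      have "f' a = f a" using fU USet_mem[where S=S, OF h(1) h(3)] by simp
      moreover have "f' c = f c" using fU USet_mem[where S=S, OF h(2) h(4)] by simp
      moreover have "a \<in> S' i1" "c \<in> S' j1" using h sub by blast+
      ultimately show ?thesis unfolding blue_ok_def using h by metis
    next
      case False
      then obtain i1 a w where h: "i1 < length Fs" "a \<in> S i1" "a \<notin> leaves (Fs!i1)" "w \<notin> f ` USet Fs S" "w \<in> VB" "b = {f a, w}"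
        using ok unfolding blue_ok_def by blast
      have "w \<noteq> u" using ufree b h(6) by blast
      then have "w \<notin> f' ` USet Fs S'" using img' h(4) by simp
      moreover have "f' a = f a" using fU USet_mem[where S=S, OF h(1) h(2)] by simp
      moreover have "a \<in> S' i1" using h sub by blast
      ultimately show ?thesis unfolding blue_ok_def using h by metis
    qed
  qed
  have N': "inv_ni Fs S' f' (R' \<union> Bl)"
    unfolding inv_ni_def
  proof (intro allI impI ballI)
    fix w e e' assume w: "w \<notin> f' ` USet Fs S'" and ee: "e \<in> R' \<union> Bl" "e' \<in> R' \<union> Bl" "w \<in> e" "w \<in> e'"
    have wu: "w \<noteq> u" and wimg: "w \<notin> f ` USet Fs S" using w img' by auto
    have "w \<noteq> f p" using wimg fpimg by blast
    then have nw: "w \<notin> {f p, u}" using wu by simp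
    have "e \<in> R \<union> Bl" using ee(1,3) nw unfolding R'_def by auto
    moreover have "e' \<in> R \<union> Bl" using ee(2,4) nw unfolding R'_def by auto
    ultimately show "e = e'" using N wimg ee(3,4) unfolding inv_ni_def by blast
  qed
  have inv': "inv_st Fs VB \<phi> D' S' f' R' Bl"
    unfolding inv_st_def using F' M' Rd' RF' B' N' by blast
  have pool': "pool Fs VB S' f' (R' \<union> Bl) = pool Fs VB S f (R \<union> Bl) - {u}"
  proof
    show "pool Fs VB S' f' (R' \<union> Bl) \<subseteq> pool Fs VB S f (R \<union> Bl) - {u}"
      unfolding pool_def using img' R'_def by auto
    show "pool Fs VB S f (R \<union> Bl) - {u} \<subseteq> pool Fs VB S' f' (R' \<union> Bl)"
    proof
      fix v assume v: "v \<in> pool Fs VB S f (R \<union> Bl) - {u}"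
      then have v1: "v \<in> VB" "v \<notin> f ` USet Fs S" "\<forall>e\<in>R \<union> Bl. v \<notin> e" "v \<noteq> u"
        unfolding pool_def by auto
      have "v \<noteq> f p" using v1(2) fpimg by blast
      then show "v \<in> pool Fs VB S' f' (R' \<union> Bl)"
        unfolding pool_def R'_def using v1 img' by auto
    qed
  qed
  show ?thesis using inv' pool' unfolding D'_def S'_def f'_def R'_def by simp
qed

lemma inv_parts:
  assumes "inv_st Fs VB \<phi> D S f R Bl"
  shows "inv_forests Fs D S" "inv_map Fs VB \<phi> S f" "inv_red Fs D f R"
    "inv_rootsfree Fs \<phi> (R \<union> Bl)" "inv_blue Fs VB S f Bl" "inv_ni Fs S f (R \<union> Bl)"
  using assms unfolding inv_st_def by auto

lemma blue_img:
  assumes inv: "inv_st Fs VB \<phi> D S f R Bl"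
    and i: "i < length Fs" and j: "j < length Fs" and ij: "i \<noteq> j"
    and a: "a \<in> S i" and c: "c \<in> S j" and cr: "c \<notin> tuple_roots Fs"
  shows "inv_st Fs VB \<phi> D S f R (insert {f a, f c} Bl)
     \<and> pool Fs VB S f (R \<union> insert {f a, f c} Bl) = pool Fs VB S f (R \<union> Bl)"
proof -
  note P = inv_parts[OF inv]
  have aU: "a \<in> USet Fs S" using USet_mem[where S=S, OF i a] .
  have cU: "c \<in> USet Fs S" using USet_mem[where S=S, OF j c] .
  have inj: "inj_on f (USet Fs S)" and froot: "\<forall>r\<in>tuple_roots Fs. f r = \<phi> r"
    using P(2) unfolding inv_map_def by auto
  have RF': "inv_rootsfree Fs \<phi> (R \<union> insert {f a, f c} Bl)"
    unfolding inv_rootsfree_def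
  proof (intro ballI impI)
    fix r1 r2 assume r: "r1 \<in> tuple_roots Fs" "r2 \<in> tuple_roots Fs" "r1 \<noteq> r2"
    have old: "{\<phi> r1, \<phi> r2} \<notin> R \<union> Bl" using P(4) r unfolding inv_rootsfree_def by blast
    have r1U: "r1 \<in> USet Fs S" using roots_in_USet[OF P(1) r(1)] .
    have r2U: "r2 \<in> USet Fs S" using roots_in_USet[OF P(1) r(2)] .
    have "f c \<noteq> \<phi> r1"
    proof
      assume "f c = \<phi> r1"
      then have "f c = f r1" using froot r(1) by simp
      then have "c = r1" using inj cU r1U by (simp add: inj_on_eq_iff)
      then show False using cr r(1) by simp
    qed
    moreover have "f c \<noteq> \<phi> r2"
    proof
      assume "f c = \<phi> r2"
      then have "f c = f r2" using froot r(2) by simp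
      then have "c = r2" using inj cU r2U by (simp add: inj_on_eq_iff)
      then show False using cr r(2) by simp
    qed
    ultimately have "{\<phi> r1, \<phi> r2} \<noteq> {f a, f c}" by auto
    then show "{\<phi> r1, \<phi> r2} \<notin> R \<union> insert {f a, f c} Bl" using old by blast
  qed
  have B': "inv_blue Fs VB S f (insert {f a, f c} Bl)"
    unfolding inv_blue_def
  proof
    fix b assume "b \<in> insert {f a, f c} Bl"
    then show "blue_ok Fs VB S f b"
    proof
      assume "b = {f a, f c}"
      then show ?thesis unfolding blue_ok_def using i j ij a c by blast
    next
      assume "b \<in> Bl"
      then show ?thesis using P(5) unfolding inv_blue_def by blast
    qed
  qed
  have N': "inv_ni Fs S f (R \<union> insert {f a, f c} Bl)"
    unfolding inv_ni_def
  proof (intro allI impI ballI)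
    fix w e e' assume w: "w \<notin> f ` USet Fs S" and ee: "e \<in> R \<union> insert {f a, f c} Bl" "e' \<in> R \<union> insert {f a, f c} Bl" "w \<in> e" "w \<in> e'"
    have "w \<notin> {f a, f c}" using w aU cU by blast
    then have "e \<in> R \<union> Bl" "e' \<in> R \<union> Bl" using ee by auto
    then show "e = e'" using P(6) w ee(3,4) unfolding inv_ni_def by blast
  qed
  have inv': "inv_st Fs VB \<phi> D S f R (insert {f a, f c} Bl)"
    unfolding inv_st_def using P(1,2,3) RF' B' N' by blast
  have "pool Fs VB S f (R \<union> insert {f a, f c} Bl) = pool Fs VB S f (R \<union> Bl)"
    unfolding pool_def using aU cU by blast
  then show ?thesis using inv' by blast
qed

lemma blue_semi:
  assumes inv: "inv_st Fs VB \<phi> D S f R Bl"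
    and i: "i < length Fs" and a: "a \<in> S i" and al: "a \<notin> leaves (Fs!i)"
    and w: "w \<in> pool Fs VB S f (R \<union> Bl)"
  shows "inv_st Fs VB \<phi> D S f R (insert {f a, w} Bl)
     \<and> pool Fs VB S f (R \<union> insert {f a, w} Bl) = pool Fs VB S f (R \<union> Bl) - {w}"
proof -
  note P = inv_parts[OF inv]
  have aU: "a \<in> USet Fs S" using USet_mem[where S=S, OF i a] .
  have wVB: "w \<in> VB" and wimg: "w \<notin> f ` USet Fs S" and wfree: "\<forall>e\<in>R \<union> Bl. w \<notin> e"
    using w unfolding pool_def by auto
  have froot: "\<forall>r\<in>tuple_roots Fs. f r = \<phi> r" using P(2) unfolding inv_map_def by auto
  have RF': "inv_rootsfree Fs \<phi> (R \<union> insert {f a, w} Bl)"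
    unfolding inv_rootsfree_def
  proof (intro ballI impI)
    fix r1 r2 assume r: "r1 \<in> tuple_roots Fs" "r2 \<in> tuple_roots Fs" "r1 \<noteq> r2"
    have old: "{\<phi> r1, \<phi> r2} \<notin> R \<union> Bl" using P(4) r unfolding inv_rootsfree_def by blast
    have "\<phi> r1 \<in> f ` USet Fs S" using roots_in_USet[OF P(1) r(1)] froot r(1) by force
    moreover have "\<phi> r2 \<in> f ` USet Fs S" using roots_in_USet[OF P(1) r(2)] froot r(2) by force
    ultimately have "w \<notin> {\<phi> r1, \<phi> r2}" using wimg by blast
    then have "{\<phi> r1, \<phi> r2} \<noteq> {f a, w}" by blast
    then show "{\<phi> r1, \<phi> r2} \<notin> R \<union> insert {f a, w} Bl" using old by blast
  qed
  have B': "inv_blue Fs VB S f (insert {f a, w} Bl)"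
    unfolding inv_blue_def
  proof
    fix b assume "b \<in> insert {f a, w} Bl"
    then show "blue_ok Fs VB S f b"
    proof
      assume "b = {f a, w}"
      then show ?thesis unfolding blue_ok_def using i a al wimg wVB by blast
    next
      assume "b \<in> Bl"
      then show ?thesis using P(5) unfolding inv_blue_def by blast
    qed
  qed
  have N': "inv_ni Fs S f (R \<union> insert {f a, w} Bl)"
    unfolding inv_ni_def
  proof (intro allI impI ballI)
    fix v e e' assume v: "v \<notin> f ` USet Fs S" and ee: "e \<in> R \<union> insert {f a, w} Bl" "e' \<in> R \<union> insert {f a, w} Bl" "v \<in> e" "v \<in> e'"
    show "e = e'"
    proof (cases "v = w")
      case True
      then have "e \<notin> R \<union> Bl" "e' \<notin> R \<union> Bl" using wfree ee(3,4) by auto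
      then show ?thesis using ee(1,2) by blast
    next
      case False
      have "v \<noteq> f a" using v aU by blast
      then have "v \<notin> {f a, w}" using False by simp
      then have "e \<in> R \<union> Bl" "e' \<in> R \<union> Bl" using ee by auto
      then show ?thesis using P(6) v ee(3,4) unfolding inv_ni_def by blast
    qed
  qed
  have inv': "inv_st Fs VB \<phi> D S f R (insert {f a, w} Bl)"
    unfolding inv_st_def using P(1,2,3) RF' B' N' by blast
  have "pool Fs VB S f (R \<union> insert {f a, w} Bl) = pool Fs VB S f (R \<union> Bl) - {w}"
  proof
    show "pool Fs VB S f (R \<union> insert {f a, w} Bl) \<subseteq> pool Fs VB S f (R \<union> Bl) - {w}"
      unfolding pool_def by auto
    show "pool Fs VB S f (R \<union> Bl) - {w} \<subseteq> pool Fs VB S f (R \<union> insert {f a, w} Bl)"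
    proof
      fix v assume v: "v \<in> pool Fs VB S f (R \<union> Bl) - {w}"
      then have v1: "v \<in> VB" "v \<notin> f ` USet Fs S" "\<forall>e\<in>R \<union> Bl. v \<notin> e" "v \<noteq> w"
        unfolding pool_def by auto
      have "v \<noteq> f a" using v1(2) aU by blast
      then show "v \<in> pool Fs VB S f (R \<union> insert {f a, w} Bl)"
        unfolding pool_def using v1 by auto
    qed
  qed
  then show ?thesis using inv' by blast
qed

lemma frontier:
  assumes RFT: "rooted_forest_tuple Fs" and inv: "inv_st Fs VB \<phi> D S f R Bl"
    and i: "i < length Fs" and ne: "fE (Fs!i) - D i \<noteq> {}"
  shows "\<exists>p x. p \<in> S i \<and> x \<in> fV (Fs!i) \<and> x \<notin> S i \<and> {p,x} \<in> fE (Fs!i) - D i \<and>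
     rooted_forest (fV (Fs!i), fE (Fs!i) - D i - {{p,x}}, insert x (S i)) \<and> p \<notin> leaves (Fs!i)"
proof -
  note P = inv_parts[OF inv]
  have Fi: "D i \<subseteq> fE (Fs!i)" "fR (Fs!i) \<subseteq> S i" "rooted_forest (fV (Fs!i), fE (Fs!i) - D i, S i)"
     "\<forall>y\<in>S i - fR (Fs!i). \<exists>e\<in>D i. y \<in> e"
    using invF[OF P(1) i] by auto
  obtain p x where px: "p \<in> S i" "x \<in> fV (Fs!i)" "x \<notin> S i" "{p,x} \<in> fE (Fs!i) - D i"
    "rooted_forest (fV (Fs!i), fE (Fs!i) - D i - {{p,x}}, insert x (S i))"
    using forest_step[OF Fi(3) ne] by blast
  have gE: "is_graph (fV (Fs!i)) (fE (Fs!i))" using rf_parts(1)[OF rft_rf[OF RFT i]] .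
  have finE: "finite (fE (Fs!i))" using graph_finite[OF gE] .
  have nl: "p \<notin> leaves (Fs!i)"
  proof (cases "p \<in> fR (Fs!i)")
    case True
    then show ?thesis unfolding leaves_def by blast
  next
    case False
    then obtain e where e: "e \<in> D i" "p \<in> e" using Fi(4) px(1) by blast
    have "e \<noteq> {p,x}" using e(1) px(4) by blast
    moreover have "e \<in> {e \<in> fE (Fs!i). p \<in> e}" using e Fi(1) by blast
    moreover have "{p,x} \<in> {e \<in> fE (Fs!i). p \<in> e}" using px(4) by blast
    moreover have "finite {e \<in> fE (Fs!i). p \<in> e}" using finE by simp
    ultimately have "card {e \<in> fE (Fs!i). p \<in> e} \<noteq> 1" by (metis card_1_singletonE singletonD)
    then show ?thesis unfolding leaves_def by blast
  qed
  show ?thesis using px nl by blast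
qed

lemma final_good:
  assumes RFT: "rooted_forest_tuple Fs" and inv: "inv_st Fs VB \<phi> D S f R Bl"
    and dn: "\<forall>i<length Fs. fE (Fs!i) - D i = {}"
  shows "good_red_copy Fs VB \<phi> R Bl"
proof -
  note P = inv_parts[OF inv]
  have DE: "D i = fE (Fs!i)" if i: "i < length Fs" for i
    using invF[OF P(1) i] dn i by blast
  have SV: "S i = fV (Fs!i)" if i: "i < length Fs" for i
  proof -
    have "rooted_forest (fV (Fs!i), fE (Fs!i) - D i, S i)" using invF[OF P(1) i] by blast
    then have "rooted_forest (fV (Fs!i), {}, S i)" using dn i by simp
    then show ?thesis using forest_noedge by blast
  qed
  have UT: "USet Fs S = tuple_verts Fs"
    unfolding USet_def tuple_verts_conv using SV by simp
  have inj: "inj_on f (tuple_verts Fs)" and fVB: "f ` tuple_verts Fs \<subseteq> VB"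
    and froot: "\<forall>r\<in>tuple_roots Fs. f r = \<phi> r"
    using P(2) UT unfolding inv_map_def by auto
  have Req: "R = (\<Union>i<length Fs. (\<lambda>e. f ` e) ` D i)" using P(3) unfolding inv_red_def .
  have Vmem: "x \<in> tuple_verts Fs" if "i < length Fs" "x \<in> fV (Fs!i)" for i x
    using that unfolding tuple_verts_conv by blast
  have same: "i1 = i2" if h: "i1 < length Fs" "i2 < length Fs" "a \<in> fV (Fs!i1)" "z \<in> fV (Fs!i2)" "f a = f z" for i1 i2 a z
  proof -
    have "a = z" using inj Vmem[OF h(1,3)] Vmem[OF h(2,4)] h(5) by (simp add: inj_on_eq_iff)
    then show ?thesis using rft_disj_mem[OF RFT h(1) h(2)] h(3,4) by blast
  qed
  have edgeV: "e \<subseteq> fV (Fs!i)" if hh: "i < length Fs" "e \<in> fE (Fs!i)" for i e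
  proof -
    have g: "is_graph (fV (Fs!i)) (fE (Fs!i))" using rf_parts(1)[OF rft_rf[OF RFT hh(1)]] .
    obtain a b where "e = {a,b}" "a \<in> fV (Fs!i)" "b \<in> fV (Fs!i)" using graph_edge_ex[OF g hh(2)] by blast
    then show ?thesis by blast
  qed
  have edgene: "e \<noteq> {}" if hh: "i < length Fs" "e \<in> fE (Fs!i)" for i e
  proof -
    have g: "is_graph (fV (Fs!i)) (fE (Fs!i))" using rf_parts(1)[OF rft_rf[OF RFT hh(1)]] .
    obtain a b where "e = {a,b}" using graph_edge_ex[OF g hh(2)] by blast
    then show ?thesis by blast
  qed
  have blueD: "(\<exists>i1<length Fs. \<exists>j1<length Fs. \<exists>a\<in>fV (Fs!i1). \<exists>c\<in>fV (Fs!j1). i1 \<noteq> j1 \<and> b = {f a, f c}) \<or>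
     (\<exists>i1<length Fs. \<exists>a\<in>fV (Fs!i1). \<exists>w. a \<notin> leaves (Fs!i1) \<and> w \<notin> f ` tuple_verts Fs \<and> w \<in> VB \<and> b = {f a, w})"
    if b: "b \<in> Bl" for b
  proof -
    have "blue_ok Fs VB S f b" using P(5) b unfolding inv_blue_def by blast
    then show ?thesis unfolding blue_ok_def
    proof
      assume "\<exists>i<length Fs. \<exists>j<length Fs. \<exists>a\<in>S i. \<exists>c\<in>S j. i \<noteq> j \<and> b = {f a, f c}"
      then obtain i1 j1 a c where h: "i1 < length Fs" "j1 < length Fs" "a \<in> S i1" "c \<in> S j1" "i1 \<noteq> j1" "b = {f a, f c}"
        by blast
      have "a \<in> fV (Fs!i1)" "c \<in> fV (Fs!j1)" using h SV by auto
      then show ?thesis using h by blast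
    next
      assume "\<exists>i<length Fs. \<exists>a\<in>S i. \<exists>w. a \<notin> leaves (Fs!i) \<and> w \<notin> f ` USet Fs S \<and> w \<in> VB \<and> b = {f a, w}"
      then obtain i1 a w where h: "i1 < length Fs" "a \<in> S i1" "a \<notin> leaves (Fs!i1)" "w \<notin> f ` USet Fs S" "w \<in> VB" "b = {f a, w}"
        by blast
      have "a \<in> fV (Fs!i1)" using h SV by auto
      moreover have "w \<notin> f ` tuple_verts Fs" using h(4) UT by simp
      ultimately show ?thesis using h by blast
    qed
  qed
  show ?thesis
    unfolding good_red_copy_def
  proof (intro exI[of _ f] conjI)
    show "inj_on f (tuple_verts Fs)" by (rule inj)
    show "f ` tuple_verts Fs \<subseteq> VB" by (rule fVB)
    show "\<forall>i<length Fs. \<forall>e\<in>fE (Fs ! i). f ` e \<in> R"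
      using DE Req by blast
    show "\<forall>r\<in>tuple_roots Fs. f r = \<phi> r" by (rule froot)
    show "\<forall>r1\<in>tuple_roots Fs. \<forall>r2\<in>tuple_roots Fs. r1 \<noteq> r2 \<longrightarrow> {\<phi> r1, \<phi> r2} \<notin> R \<union> Bl"
      using P(4) unfolding inv_rootsfree_def .
    show "\<forall>i<length Fs. \<forall>e\<in>Bl. \<not> e \<subseteq> f ` fV (Fs ! i)"
    proof (intro allI impI ballI notI)
      fix i e assume i: "i < length Fs" and e: "e \<in> Bl" and sub: "e \<subseteq> f ` fV (Fs ! i)"
      from blueD[OF e] show False
      proof
        assume "\<exists>i1<length Fs. \<exists>j1<length Fs. \<exists>a\<in>fV (Fs!i1). \<exists>c\<in>fV (Fs!j1). i1 \<noteq> j1 \<and> e = {f a, f c}"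
        then obtain i1 j1 a c where h: "i1 < length Fs" "j1 < length Fs" "a \<in> fV (Fs!i1)" "c \<in> fV (Fs!j1)" "i1 \<noteq> j1" "e = {f a, f c}"
          by blast
        obtain z1 where z1: "z1 \<in> fV (Fs!i)" "f a = f z1" using sub h(6) by blast
        obtain z2 where z2: "z2 \<in> fV (Fs!i)" "f c = f z2" using sub h(6) by blast
        have "i1 = i" using same[OF h(1) i h(3) z1(1) z1(2)] .
        moreover have "j1 = i" using same[OF h(2) i h(4) z2(1) z2(2)] .
        ultimately show False using h(5) by simp
      next
        assume "\<exists>i1<length Fs. \<exists>a\<in>fV (Fs!i1). \<exists>w. a \<notin> leaves (Fs!i1) \<and> w \<notin> f ` tuple_verts Fs \<and> w \<in> VB \<and> e = {f a, w}"
        then obtain i1 a w where h: "w \<notin> f ` tuple_verts Fs" "e = {f a, w}" by blast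
        have "w \<in> f ` fV (Fs!i)" using sub h(2) by blast
        then have "w \<in> f ` tuple_verts Fs" using Vmem[OF i] by blast
        then show False using h(1) by simp
      qed
    qed
    show "\<forall>i<length Fs. \<forall>e\<in>R. e \<subseteq> f ` fV (Fs ! i) \<longrightarrow> e \<in> (\<lambda>e'. f ` e') ` fE (Fs ! i)"
    proof (intro allI impI ballI)
      fix i e assume i: "i < length Fs" and e: "e \<in> R" and sub: "e \<subseteq> f ` fV (Fs ! i)"
      obtain j e0 where j: "j < length Fs" "e0 \<in> D j" "e = f ` e0" using e Req by blast
      have e0E: "e0 \<in> fE (Fs!j)" using j DE by blast
      obtain a where a: "a \<in> e0" using edgene[OF j(1) e0E] by blast
      have aV: "a \<in> fV (Fs!j)" using edgeV[OF j(1) e0E] a by blast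
      obtain z where z: "z \<in> fV (Fs!i)" "f a = f z" using sub j(3) a by blast
      have "j = i" using same[OF j(1) i aV z(1) z(2)] .
      then show "e \<in> (\<lambda>e'. f ` e') ` fE (Fs ! i)" using j(3) e0E by blast
    qed
    show "\<forall>e\<in>R \<union> Bl. e \<inter> f ` tuple_verts Fs \<noteq> {}"
    proof
      fix e assume e: "e \<in> R \<union> Bl"
      show "e \<inter> f ` tuple_verts Fs \<noteq> {}"
      proof (cases "e \<in> R")
        case True
        obtain j e0 where j: "j < length Fs" "e0 \<in> D j" "e = f ` e0" using True Req by blast
        have e0E: "e0 \<in> fE (Fs!j)" using j DE by blast
        obtain a where a: "a \<in> e0" using edgene[OF j(1) e0E] by blast
        have "a \<in> tuple_verts Fs" using Vmem[OF j(1)] edgeV[OF j(1) e0E] a by blast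
        then show ?thesis using a j(3) by blast
      next
        case False
        then have "e \<in> Bl" using e by simp
        from blueD[OF this] obtain i1 a where "i1 < length Fs" "a \<in> fV (Fs!i1)" "f a \<in> e" by blast
        then show ?thesis using Vmem by blast
      qed
    qed
    show "\<forall>u\<in>VB - f ` tuple_verts Fs. card {e \<in> R \<union> Bl. u \<in> e} \<le> 1 \<and>
        (\<forall>w. {u, w} \<in> R \<union> Bl \<longrightarrow> w \<notin> f ` tuple_leaves Fs)"
    proof (intro ballI conjI allI impI)
      fix u assume u: "u \<in> VB - f ` tuple_verts Fs"
      then have un: "u \<notin> f ` USet Fs S" using UT by simp
      have ni: "\<forall>e\<in>R \<union> Bl. \<forall>e'\<in>R \<union> Bl. u \<in> e \<longrightarrow> u \<in> e' \<longrightarrow> e = e'"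
        using P(6) un unfolding inv_ni_def by blast
      show "card {e \<in> R \<union> Bl. u \<in> e} \<le> 1"
      proof (cases "finite {e \<in> R \<union> Bl. u \<in> e}")
        case True
        have "\<forall>a1\<in>{e \<in> R \<union> Bl. u \<in> e}. \<forall>a2\<in>{e \<in> R \<union> Bl. u \<in> e}. a1 = a2" using ni by blast
        then show ?thesis using card_le_Suc0_iff_eq[OF True] by simp
      next
        case False
        then show ?thesis by simp
      qed
      fix w assume uw: "{u, w} \<in> R \<union> Bl"
      have notR: "{u,w} \<notin> R"
      proof
        assume "{u,w} \<in> R"
        then obtain j e0 where j: "j < length Fs" "e0 \<in> D j" "{u,w} = f ` e0" using Req by blast
        have e0E: "e0 \<in> fE (Fs!j)" using j DE by blast
        have "u \<in> f ` e0" using j(3) by blast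
        then have "u \<in> f ` tuple_verts Fs" using Vmem[OF j(1)] edgeV[OF j(1) e0E] by blast
        then show False using u by simp
      qed
      then have "{u,w} \<in> Bl" using uw by simp
      from blueD[OF this] show "w \<notin> f ` tuple_leaves Fs"
      proof
        assume "\<exists>i1<length Fs. \<exists>j1<length Fs. \<exists>a\<in>fV (Fs!i1). \<exists>c\<in>fV (Fs!j1). i1 \<noteq> j1 \<and> {u,w} = {f a, f c}"
        then obtain i1 j1 a c where h: "i1 < length Fs" "j1 < length Fs" "a \<in> fV (Fs!i1)" "c \<in> fV (Fs!j1)" "{u,w} = {f a, f c}"
          by blast
        have "u \<in> {u,w}" by simp
        then have "u \<in> {f a, f c}" by (simp only: h(5))
        moreover have "f a \<in> f ` tuple_verts Fs" using Vmem[OF h(1,3)] by blast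
        moreover have "f c \<in> f ` tuple_verts Fs" using Vmem[OF h(2,4)] by blast
        ultimately have "u \<in> f ` tuple_verts Fs" by blast
        then show ?thesis using u by simp
      next
        assume "\<exists>i1<length Fs. \<exists>a\<in>fV (Fs!i1). \<exists>w'. a \<notin> leaves (Fs!i1) \<and> w' \<notin> f ` tuple_verts Fs \<and> w' \<in> VB \<and> {u,w} = {f a, w'}"
        then obtain i1 a w' where h: "i1 < length Fs" "a \<in> fV (Fs!i1)" "a \<notin> leaves (Fs!i1)" "{u,w} = {f a, w'}"
          by blast
        have "u \<noteq> f a" using u Vmem[OF h(1) h(2)] by blast
        then have wfa: "w = f a" using h(4) by (auto simp: doubleton_eq_iff)
        show ?thesis
        proof
          assume "w \<in> f ` tuple_leaves Fs"
          then obtain k z where k: "k < length Fs" "z \<in> leaves (Fs!k)" "w = f z"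
            unfolding tuple_leaves_conv by blast
          have zV: "z \<in> fV (Fs!k)" using k(2) unfolding leaves_def by blast
          have "f a = f z" using wfa k(3) by simp
          then have "a = z" using inj Vmem[OF h(1,2)] Vmem[OF k(1) zV] by (simp add: inj_on_eq_iff)
          moreover have "k = i1" using same[OF k(1) h(1) zV h(2)] \<open>f a = f z\<close> by simp
          ultimately show False using h(3) k(2) by simp
        qed
      qed
    qed
  qed
qed

definition cnt :: "'a rforest list \<Rightarrow> (nat \<Rightarrow> 'a set set) \<Rightarrow> nat \<Rightarrow> nat" where
  "cnt Fs D = (\<lambda>a. card (fE (Fs!a) - D a))"

lemma finE: "rooted_forest_tuple Fs \<Longrightarrow> i < length Fs \<Longrightarrow> finite (fE (Fs!i))"
  using graph_finite[OF rf_parts(1)[OF rft_rf]] by blast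

lemma cnt_upd:
  assumes RFT: "rooted_forest_tuple Fs" and i: "i < length Fs" and e: "{p,x} \<in> fE (Fs!i) - D i"
  shows "cnt Fs (D(i := insert {p,x} (D i))) = (cnt Fs D)(i := cnt Fs D i - 1)"
proof
  fix a
  show "cnt Fs (D(i := insert {p,x} (D i))) a = ((cnt Fs D)(i := cnt Fs D i - 1)) a"
  proof (cases "a = i")
    case True
    have "fE (Fs!i) - insert {p,x} (D i) = (fE (Fs!i) - D i) - {{p,x}}" by blast
    moreover have "finite (fE (Fs!i) - D i)" using finE[OF RFT i] by simp
    ultimately have "card (fE (Fs!i) - insert {p,x} (D i)) = card (fE (Fs!i) - D i) - 1"
      using e by simp
    then show ?thesis using True unfolding cnt_def by simp
  next
    case False
    then show ?thesis unfolding cnt_def by simp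
  qed
qed

lemma fupd_USet: "x \<notin> USet Fs S \<Longrightarrow> z \<in> USet Fs S \<Longrightarrow> (f(x := u)) z = f z"
  by auto

lemma branchA:
  assumes RFT: "rooted_forest_tuple Fs" and inv: "inv_st Fs VB \<phi> D S f R Bl"
    and i: "i < length Fs" and j: "j < length Fs" and ij: "i \<noteq> j"
    and p: "p \<in> S i" and xV: "x \<in> fV (Fs!i)" and xS: "x \<notin> S i"
    and e: "{p,x} \<in> fE (Fs!i) - D i"
    and rf': "rooted_forest (fV (Fs!i), fE (Fs!i) - D i - {{p,x}}, insert x (S i))"
    and q: "q \<in> S j"
    and u: "u \<in> pool Fs VB S f (R \<union> Bl)"
  shows "\<exists>D' S' f'. inv_st Fs VB \<phi> D' S' f' (insert {f p, u} R) (insert {f q, u} Bl) \<and>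
     cnt Fs D' = (cnt Fs D)(i := cnt Fs D i - 1) \<and>
     pool Fs VB S' f' (insert {f p, u} R \<union> insert {f q, u} Bl) = pool Fs VB S f (R \<union> Bl) - {u}"
proof -
  define D1 where "D1 = D(i := insert {p,x} (D i))"
  define S1 where "S1 = S(i := insert x (S i))"
  define f1 where "f1 = f(x := u)"
  have st1: "inv_st Fs VB \<phi> D1 S1 f1 (insert {f p, u} R) Bl"
    and pool1: "pool Fs VB S1 f1 (insert {f p, u} R \<union> Bl) = pool Fs VB S f (R \<union> Bl) - {u}"
    using emb_step[OF RFT inv i p xV xS e rf' u] unfolding D1_def S1_def f1_def by auto
  have F: "inv_forests Fs D S" using inv_parts(1)[OF inv] .
  have xU: "x \<notin> USet Fs S" using notin_USet[OF RFT F i xV xS] .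
  have qU: "q \<in> USet Fs S" using USet_mem[where S=S, OF j q] .
  have fq: "f1 q = f q" using fupd_USet[OF xU qU] unfolding f1_def .
  have fx: "f1 x = u" unfolding f1_def by simp
  have q1: "q \<in> S1 j" using q ij unfolding S1_def by simp
  have x1: "x \<in> S1 i" unfolding S1_def by simp
  have xr: "x \<notin> tuple_roots Fs"
  proof
    assume "x \<in> tuple_roots Fs"
    then obtain k where k: "k < length Fs" "x \<in> fR (Fs!k)" unfolding tuple_roots_conv by blast
    have "fR (Fs!k) \<subseteq> fV (Fs!k)" using rf_parts(3)[OF rft_rf[OF RFT k(1)]] .
    then have "k = i" using rft_disj_mem[OF RFT k(1) i] k(2) xV by blast
    then show False using k(2) xS invF[OF F i] by blast
  qed
  have st2: "inv_st Fs VB \<phi> D1 S1 f1 (insert {f p, u} R) (insert {f1 q, f1 x} Bl)"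
    and pool2: "pool Fs VB S1 f1 (insert {f p, u} R \<union> insert {f1 q, f1 x} Bl) = pool Fs VB S1 f1 (insert {f p, u} R \<union> Bl)"
    using blue_img[OF st1 j i ij[symmetric] q1 x1 xr] by auto
  have "cnt Fs D1 = (cnt Fs D)(i := cnt Fs D i - 1)" unfolding D1_def using cnt_upd[where D=D, OF RFT i e] .
  then show ?thesis using st2 pool2 pool1 unfolding fq fx by blast
qed

lemma branchB:
  assumes RFT: "rooted_forest_tuple Fs" and inv: "inv_st Fs VB \<phi> D S f R Bl"
    and i: "i < length Fs"
    and p: "p \<in> S i" and xV: "x \<in> fV (Fs!i)" and xS: "x \<notin> S i"
    and e: "{p,x} \<in> fE (Fs!i) - D i"
    and rf': "rooted_forest (fV (Fs!i), fE (Fs!i) - D i - {{p,x}}, insert x (S i))"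
    and pl: "p \<notin> leaves (Fs!i)"
    and u: "u \<in> pool Fs VB S f (R \<union> Bl)" and w: "w \<in> pool Fs VB S f (R \<union> Bl)" and uw: "u \<noteq> w"
  shows "\<exists>D' S' f'. inv_st Fs VB \<phi> D' S' f' (insert {f p, u} R) (insert {f p, w} Bl) \<and>
     cnt Fs D' = (cnt Fs D)(i := cnt Fs D i - 1) \<and>
     pool Fs VB S' f' (insert {f p, u} R \<union> insert {f p, w} Bl) = pool Fs VB S f (R \<union> Bl) - {u} - {w}"
proof -
  define D1 where "D1 = D(i := insert {p,x} (D i))"
  define S1 where "S1 = S(i := insert x (S i))"
  define f1 where "f1 = f(x := u)"
  have st1: "inv_st Fs VB \<phi> D1 S1 f1 (insert {f p, u} R) Bl"
    and pool1: "pool Fs VB S1 f1 (insert {f p, u} R \<union> Bl) = pool Fs VB S f (R \<union> Bl) - {u}"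
    using emb_step[OF RFT inv i p xV xS e rf' u] unfolding D1_def S1_def f1_def by auto
  have F: "inv_forests Fs D S" using inv_parts(1)[OF inv] .
  have xU: "x \<notin> USet Fs S" using notin_USet[OF RFT F i xV xS] .
  have pU: "p \<in> USet Fs S" using USet_mem[where S=S, OF i p] .
  have fp: "f1 p = f p" using fupd_USet[OF xU pU] unfolding f1_def .
  have p1: "p \<in> S1 i" using p unfolding S1_def by simp
  have w1: "w \<in> pool Fs VB S1 f1 (insert {f p, u} R \<union> Bl)" using pool1 w uw by simp
  have st2: "inv_st Fs VB \<phi> D1 S1 f1 (insert {f p, u} R) (insert {f1 p, w} Bl)"
    and pool2: "pool Fs VB S1 f1 (insert {f p, u} R \<union> insert {f1 p, w} Bl) = pool Fs VB S1 f1 (insert {f p, u} R \<union> Bl) - {w}"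
    using blue_semi[OF st1 i p1 pl w1] by auto
  have "cnt Fs D1 = (cnt Fs D)(i := cnt Fs D i - 1)" unfolding D1_def using cnt_upd[where D=D, OF RFT i e] .
  then show ?thesis using st2 pool2 pool1 unfolding fp by blast
qed

lemma branchM:
  assumes RFT: "rooted_forest_tuple Fs" and inv: "inv_st Fs VB \<phi> D S f R Bl"
    and i: "i < length Fs" and j: "j < length Fs" and k: "k < length Fs"
    and ij: "i \<noteq> j" and ik: "i \<noteq> k" and jk: "j \<noteq> k"
    and p: "p \<in> S i" and xV: "x \<in> fV (Fs!i)" and xS: "x \<notin> S i"
    and e: "{p,x} \<in> fE (Fs!i) - D i"
    and rf': "rooted_forest (fV (Fs!i), fE (Fs!i) - D i - {{p,x}}, insert x (S i))"
    and q: "q \<in> S j" and yV: "y \<in> fV (Fs!j)" and yS: "y \<notin> S j"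
    and e2: "{q,y} \<in> fE (Fs!j) - D j"
    and rf2: "rooted_forest (fV (Fs!j), fE (Fs!j) - D j - {{q,y}}, insert y (S j))"
    and s: "s \<in> S k"
    and u: "u \<in> pool Fs VB S f (R \<union> Bl)" and w: "w \<in> pool Fs VB S f (R \<union> Bl)" and uw: "u \<noteq> w"
  shows "\<exists>D' S' f'. inv_st Fs VB \<phi> D' S' f' (insert {f q, w} (insert {f p, u} R)) (insert {f s, w} (insert {f p, w} Bl)) \<and>
     cnt Fs D' = (cnt Fs D)(i := cnt Fs D i - 1, j := cnt Fs D j - 1) \<and>
     pool Fs VB S' f' (insert {f q, w} (insert {f p, u} R) \<union> insert {f s, w} (insert {f p, w} Bl)) = pool Fs VB S f (R \<union> Bl) - {u} - {w}"
proof -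
  define D1 where "D1 = D(i := insert {p,x} (D i))"
  define S1 where "S1 = S(i := insert x (S i))"
  define f1 where "f1 = f(x := u)"
  have st1: "inv_st Fs VB \<phi> D1 S1 f1 (insert {f p, u} R) Bl"
    and pool1: "pool Fs VB S1 f1 (insert {f p, u} R \<union> Bl) = pool Fs VB S f (R \<union> Bl) - {u}"
    using emb_step[OF RFT inv i p xV xS e rf' u] unfolding D1_def S1_def f1_def by auto
  have F: "inv_forests Fs D S" using inv_parts(1)[OF inv] .
  have xU: "x \<notin> USet Fs S" using notin_USet[OF RFT F i xV xS] .
  have pU: "p \<in> USet Fs S" using USet_mem[where S=S, OF i p] .
  have qU: "q \<in> USet Fs S" using USet_mem[where S=S, OF j q] .
  have sU: "s \<in> USet Fs S" using USet_mem[where S=S, OF k s] .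
  have q1: "q \<in> S1 j" and yS1: "y \<notin> S1 j" and e21: "{q,y} \<in> fE (Fs!j) - D1 j"
    and rf21: "rooted_forest (fV (Fs!j), fE (Fs!j) - D1 j - {{q,y}}, insert y (S1 j))"
  proof -
    have ji: "j \<noteq> i" using ij by (rule not_sym)
    have D1j: "D1 j = D j" unfolding D1_def using ji by (rule fun_upd_other)
    have S1j: "S1 j = S j" unfolding S1_def using ji by (rule fun_upd_other)
    show "q \<in> S1 j" using q unfolding S1j .
    show "y \<notin> S1 j" using yS unfolding S1j .
    show "{q,y} \<in> fE (Fs!j) - D1 j" using e2 unfolding D1j .
    show "rooted_forest (fV (Fs!j), fE (Fs!j) - D1 j - {{q,y}}, insert y (S1 j))" using rf2 unfolding D1j S1j .
  qed
  have w1: "w \<in> pool Fs VB S1 f1 (insert {f p, u} R \<union> Bl)" using pool1 w uw by simp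
  have f1q: "f1 q = f q" using fupd_USet[OF xU qU] unfolding f1_def .
  define D2 where "D2 = D1(j := insert {q,y} (D1 j))"
  define S2 where "S2 = S1(j := insert y (S1 j))"
  define f2 where "f2 = f1(y := w)"
  have st2: "inv_st Fs VB \<phi> D2 S2 f2 (insert {f1 q, w} (insert {f p, u} R)) Bl"
    and pool2: "pool Fs VB S2 f2 (insert {f1 q, w} (insert {f p, u} R) \<union> Bl) = pool Fs VB S1 f1 (insert {f p, u} R \<union> Bl) - {w}"
    using emb_step[OF RFT st1 j q1 yV yS1 e21 rf21 w1] unfolding D2_def S2_def f2_def by auto
  have F1: "inv_forests Fs D1 S1" using inv_parts(1)[OF st1] .
  have yU1: "y \<notin> USet Fs S1" using notin_USet[OF RFT F1 j yV yS1] .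
  have U1: "USet Fs S1 = insert x (USet Fs S)" unfolding S1_def using USet_upd[OF i] .
  have f2p: "f2 p = f p"
  proof -
    have "p \<in> USet Fs S1" using U1 pU by simp
    then have "f2 p = f1 p" unfolding f2_def by (rule fupd_USet[OF yU1])
    also have "\<dots> = f p" using fupd_USet[OF xU pU] unfolding f1_def .
    finally show ?thesis .
  qed
  have f2s: "f2 s = f s"
  proof -
    have "s \<in> USet Fs S1" using U1 sU by simp
    then have "f2 s = f1 s" unfolding f2_def by (rule fupd_USet[OF yU1])
    also have "\<dots> = f s" using fupd_USet[OF xU sU] unfolding f1_def .
    finally show ?thesis .
  qed
  have f2y: "f2 y = w" unfolding f2_def by simp
  have p2: "p \<in> S2 i"
  proof -
    have "S2 i = S1 i" unfolding S2_def using ij by (rule fun_upd_other)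
    moreover have "S1 i = insert x (S i)" unfolding S1_def by (rule fun_upd_same)
    ultimately show ?thesis using p by simp
  qed
  have s2: "s \<in> S2 k"
  proof -
    have "k \<noteq> j" using jk by (rule not_sym)
    then have "S2 k = S1 k" unfolding S2_def by (rule fun_upd_other)
    moreover have "k \<noteq> i" using ik by (rule not_sym)
    then have "S1 k = S k" unfolding S1_def by (rule fun_upd_other)
    ultimately show ?thesis using s by simp
  qed
  have y2: "y \<in> S2 j" unfolding S2_def by simp
  have yr: "y \<notin> tuple_roots Fs"
  proof
    assume "y \<in> tuple_roots Fs"
    then obtain k' where k': "k' < length Fs" "y \<in> fR (Fs!k')" unfolding tuple_roots_conv by blast
    have "fR (Fs!k') \<subseteq> fV (Fs!k')" using rf_parts(3)[OF rft_rf[OF RFT k'(1)]] .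
    then have "k' = j" using rft_disj_mem[OF RFT k'(1) j] k'(2) yV by blast
    then show False using k'(2) yS invF[OF F j] by blast
  qed
  have st3: "inv_st Fs VB \<phi> D2 S2 f2 (insert {f1 q, w} (insert {f p, u} R)) (insert {f2 p, f2 y} Bl)"
    and pool3: "pool Fs VB S2 f2 (insert {f1 q, w} (insert {f p, u} R) \<union> insert {f2 p, f2 y} Bl) = pool Fs VB S2 f2 (insert {f1 q, w} (insert {f p, u} R) \<union> Bl)"
    using blue_img[OF st2 i j ij p2 y2 yr] by auto
  have st4: "inv_st Fs VB \<phi> D2 S2 f2 (insert {f1 q, w} (insert {f p, u} R)) (insert {f2 s, f2 y} (insert {f2 p, f2 y} Bl))"
    and pool4: "pool Fs VB S2 f2 (insert {f1 q, w} (insert {f p, u} R) \<union> insert {f2 s, f2 y} (insert {f2 p, f2 y} Bl)) = pool Fs VB S2 f2 (insert {f1 q, w} (insert {f p, u} R) \<union> insert {f2 p, f2 y} Bl)"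
    using blue_img[OF st3 k j jk[symmetric] s2 y2 yr] by auto
  have c1: "cnt Fs D1 = (cnt Fs D)(i := cnt Fs D i - 1)" unfolding D1_def using cnt_upd[where D=D, OF RFT i e] .
  have c2: "cnt Fs D2 = (cnt Fs D1)(j := cnt Fs D1 j - 1)" unfolding D2_def using cnt_upd[where D=D1, OF RFT j e21] .
  have "cnt Fs D2 = (cnt Fs D)(i := cnt Fs D i - 1, j := cnt Fs D j - 1)"
    unfolding c2 c1 using ij by simp
  then show ?thesis using st4 pool4 pool3 pool2 pool1 unfolding f1q f2p f2s f2y by blast
qed

lemma wc_step:
  assumes "e1 \<noteq> e2" "e1 \<in> complete_edges V - (R \<union> Bl)" "e2 \<in> complete_edges V - (R \<union> Bl)"
    "wc_force V n P (insert e1 R) (insert e2 Bl)" "wc_force V n P (insert e2 R) (insert e1 Bl)"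
  shows "wc_force V (Suc n) P R Bl"
  using assms by auto

lemma ce_mem: "a \<in> V \<Longrightarrow> b \<in> V \<Longrightarrow> a \<noteq> b \<Longrightarrow> {a,b} \<in> complete_edges V"
  unfolding complete_edges_def by blast

lemma poolD: "v \<in> pool Fs VB S f C \<Longrightarrow> v \<in> VB \<and> v \<notin> f ` USet Fs S \<and> (\<forall>e\<in>C. v \<notin> e)"
  unfolding pool_def by blast

lemma imgD:
  assumes "inv_st Fs VB \<phi> D S f R Bl" "i < length Fs" "p \<in> S i"
  shows "f p \<in> VB \<and> f p \<in> f ` USet Fs S"
proof -
  have pU: "p \<in> USet Fs S" using USet_mem[where S=S, OF assms(2,3)] .
  have "f ` USet Fs S \<subseteq> VB" using inv_parts(2)[OF assms(1)] unfolding inv_map_def by blast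
  then show ?thesis using pU by blast
qed

lemma injD:
  assumes RFT: "rooted_forest_tuple Fs" and inv: "inv_st Fs VB \<phi> D S f R Bl"
    and i: "i < length Fs" and j: "j < length Fs" and ij: "i \<noteq> j" and p: "p \<in> S i" and q: "q \<in> S j"
  shows "f p \<noteq> f q"
proof
  assume eq: "f p = f q"
  have F: "inv_forests Fs D S" using inv_parts(1)[OF inv] .
  have inj: "inj_on f (USet Fs S)" using inv_parts(2)[OF inv] unfolding inv_map_def by blast
  have "p = q" using inj USet_mem[where S=S, OF i p] USet_mem[where S=S, OF j q] eq by (simp add: inj_on_eq_iff)
  moreover have "p \<in> fV (Fs!i)" using invF_SV[OF F i] p by blast
  moreover have "q \<in> fV (Fs!j)" using invF_SV[OF F j] q by blast
  ultimately show False using rft_disj_mem[OF RFT i j] ij by blast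
qed

lemma free_edge:
  assumes "a \<in> VB" "a \<in> f ` USet Fs S" "v \<in> pool Fs VB S f C"
  shows "{a, v} \<in> complete_edges VB - C"
proof -
  have v: "v \<in> VB" "v \<notin> f ` USet Fs S" "\<forall>e\<in>C. v \<notin> e" using poolD[OF assms(3)] by auto
  have "a \<noteq> v" using assms(2) v(2) by blast
  then have "{a,v} \<in> complete_edges VB" by (rule ce_mem[OF assms(1) v(1)])
  moreover have "{a,v} \<notin> C" using v(3) by blast
  ultimately show ?thesis by blast
qed

lemma two_in: "finite A \<Longrightarrow> 2 \<le> card A \<Longrightarrow> \<exists>u\<in>A. \<exists>w\<in>A. u \<noteq> w"
  by (metis One_nat_def card_le_Suc0_iff_eq not_less_eq_eq numeral_2_eq_2)

lemma one_in: "1 \<le> card A \<Longrightarrow> \<exists>u. u \<in> A"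
  by (metis card.empty ex_in_conv not_one_le_zero)

lemma sum_dec: "i < (l::nat) \<Longrightarrow> 0 < d i \<Longrightarrow> (\<Sum>c<l. (d(i := d i - 1)) c) = (\<Sum>c<l. (d c::nat)) - 1"
  using sum_upd[of i l d "d i - 1"] by simp

lemma ex_max: "finite A \<Longrightarrow> A \<noteq> {} \<Longrightarrow> \<exists>i\<in>A. \<forall>a\<in>A. (d a :: nat) \<le> d i"
proof -
  assume A: "finite A" "A \<noteq> {}"
  have "Max (d ` A) \<in> d ` A" using A by simp
  then obtain i where i: "i \<in> A" "d i = Max (d ` A)" by auto
  have "\<forall>a\<in>A. d a \<le> d i" using A i(2) by simp
  then show ?thesis using i(1) by blast
qed

lemma main_game:
  fixes Fs :: "'a rforest list" and VB :: "'b set"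
  assumes RFT: "rooted_forest_tuple Fs" and finVB: "finite VB"
  shows "inv_st Fs VB \<phi> D S f R Bl \<Longrightarrow> n = (\<Sum>a<length Fs. cnt Fs D a) \<Longrightarrow>
    Inv (length Fs) (cnt Fs D) (card (pool Fs VB S f (R \<union> Bl))) n \<Longrightarrow>
    wc_force VB n (good_red_copy Fs VB \<phi>) R Bl"
proof (induction n arbitrary: D S f R Bl rule: less_induct)
  case (less n)
  define l where "l = length Fs"
  define d where "d = cnt Fs D"
  define pl where "pl = card (pool Fs VB S f (R \<union> Bl))"
  define P where "P = good_red_copy Fs VB \<phi>"
  have inv: "inv_st Fs VB \<phi> D S f R Bl" by (rule less.prems(1))
  have nsum: "n = (\<Sum>a<l. d a)" using less.prems(2) unfolding l_def d_def .
  have Iv: "Inv l d pl n" using less.prems(3) unfolding l_def d_def pl_def .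
  have finpool: "finite (pool Fs VB S f C)" for C
    using finVB unfolding pool_def by simp
  have IH: "wc_force VB m P R' Bl'"
    if "m < n" "inv_st Fs VB \<phi> D' S' f' R' Bl'" "m = (\<Sum>a<l. cnt Fs D' a)"
       "Inv l (cnt Fs D') (card (pool Fs VB S' f' (R' \<union> Bl'))) m" for m D' S' f' R' Bl'
    using less.IH that unfolding P_def l_def by blast
  have nonempty: "fE (Fs!a) - D a \<noteq> {}" if "a < l" "0 < d a" for a
  proof
    assume h: "fE (Fs!a) - D a = {}"
    have "d a = card (fE (Fs!a) - D a)" unfolding d_def cnt_def by simp
    also have "\<dots> = 0" unfolding h by (rule card.empty)
    finally have "d a = 0" .
    then show False using that(2) by simp
  qed
  show ?case
  proof (cases "n = 0")
    case True
    have "\<forall>a<l. d a = 0"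
    proof (intro allI impI)
      fix a assume "a < l"
      then have "d a \<le> n" using sum_single[of a l d] nsum by simp
      then show "d a = 0" using True by simp
    qed
    then have dn: "\<forall>a<length Fs. fE (Fs!a) - D a = {}"
      using finE[OF RFT] unfolding d_def cnt_def l_def by auto
    have "good_red_copy Fs VB \<phi> R Bl" using final_good[OF RFT inv dn] .
    then show ?thesis using True by simp
  next
    case False
    have ex_pos: "\<exists>a<l. 0 < d a"
    proof (rule ccontr)
      assume "\<not> ?thesis"
      then have "\<forall>a\<in>{..<l}. d a = 0" by auto
      then have "(\<Sum>a<l. d a) = 0" by simp
      then show False using False nsum by simp
    qed
    then obtain a0 where a0: "a0 < l" "0 < d a0" by blast
    have lne: "{..<l} \<noteq> {}" using a0 by auto
    obtain i where i: "i \<in> {..<l}" "\<forall>a\<in>{..<l}. d a \<le> d i" using ex_max[OF finite_lessThan lne, of d] by blast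
    have il: "i < l" using i(1) by simp
    have mi: "\<forall>a<l. d a \<le> d i" using i(2) by simp
    have pi: "0 < d i" using mi a0 by (meson less_le_trans)
    have iL: "i < length Fs" using il unfolding l_def .
    obtain p x where px: "p \<in> S i" "x \<in> fV (Fs!i)" "x \<notin> S i" "{p,x} \<in> fE (Fs!i) - D i"
      "rooted_forest (fV (Fs!i), fE (Fs!i) - D i - {{p,x}}, insert x (S i))" "p \<notin> leaves (Fs!i)"
      using frontier[OF RFT inv iL nonempty[OF il pi]] by blast
    have fp: "f p \<in> VB" "f p \<in> f ` USet Fs S" using imgD[OF inv iL px(1)] by auto
    obtain n1 where n1: "n = Suc n1" using False by (cases n) auto
    show ?thesis
    proof (cases "\<forall>a<l. a \<noteq> i \<longrightarrow> d a = 0")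
      case single: True
      have LBr: "2 \<le> pl \<and> Inv l (d(i := d i - 1)) (pl - 2) (n - 1)"
        using LB[where d=d, OF il pi single Iv nsum] .
      obtain u w where uw: "u \<in> pool Fs VB S f (R \<union> Bl)" "w \<in> pool Fs VB S f (R \<union> Bl)" "u \<noteq> w"
        using two_in[OF finpool] LBr unfolding pl_def by blast
      have sumd: "n - 1 = (\<Sum>c<l. (d(i := d i - 1)) c)" using sum_dec[where d=d, OF il pi] nsum by simp
      have br: "wc_force VB n1 P (insert {f p, a} R) (insert {f p, b} Bl)"
        if ab: "a \<in> pool Fs VB S f (R \<union> Bl)" "b \<in> pool Fs VB S f (R \<union> Bl)" "a \<noteq> b" for a b
      proof -
        obtain D' S' f' where st: "inv_st Fs VB \<phi> D' S' f' (insert {f p, a} R) (insert {f p, b} Bl)"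
          "cnt Fs D' = (cnt Fs D)(i := cnt Fs D i - 1)"
          "pool Fs VB S' f' (insert {f p, a} R \<union> insert {f p, b} Bl) = pool Fs VB S f (R \<union> Bl) - {a} - {b}"
          using branchB[OF RFT inv iL px(1-6) ab] by blast
        have cd: "cnt Fs D' = d(i := d i - 1)" using st(2) unfolding d_def .
        have "card (pool Fs VB S' f' (insert {f p, a} R \<union> insert {f p, b} Bl)) = pl - 2"
          unfolding st(3) pl_def using ab finpool by (simp add: card_Diff_singleton)
        then show ?thesis
          using IH[of n1 D' S' f' "insert {f p, a} R" "insert {f p, b} Bl"] st(1) cd sumd n1 LBr by simp
      qed
      have e1: "{f p, u} \<in> complete_edges VB - (R \<union> Bl)" using free_edge[OF fp uw(1)] .
      have e2: "{f p, w} \<in> complete_edges VB - (R \<union> Bl)" using free_edge[OF fp uw(2)] .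
      have ne: "{f p, u} \<noteq> {f p, w}" using uw(3) by (auto simp: doubleton_eq_iff)
      have "wc_force VB (Suc n1) P R Bl"
        using wc_step[OF ne e1 e2 br[OF uw] br[OF uw(2) uw(1) uw(3)[symmetric]]] .
      then show ?thesis unfolding n1 P_def .
    next
      case notsingle: False
      then obtain a1 where a1: "a1 < l" "a1 \<noteq> i" "0 < d a1" by auto
      have One: "{a. a < l \<and> a \<noteq> i} \<noteq> {}" using a1 by blast
      have Ofin: "finite {a. a < l \<and> a \<noteq> i}" by simp
      obtain j where j: "j \<in> {a. a < l \<and> a \<noteq> i}" "\<forall>a\<in>{a. a < l \<and> a \<noteq> i}. d a \<le> d j"
        using ex_max[OF Ofin One, of d] by blast
      have jl: "j < l" and ij: "i \<noteq> j" using j(1) by auto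
      have mj: "\<forall>a<l. a \<noteq> i \<longrightarrow> d a \<le> d j" using j(2) by simp
      have pj: "0 < d j" using mj a1 by (meson less_le_trans)
      have jL: "j < length Fs" using jl unfolding l_def .
      obtain q y where qy: "q \<in> S j" "y \<in> fV (Fs!j)" "y \<notin> S j" "{q,y} \<in> fE (Fs!j) - D j"
        "rooted_forest (fV (Fs!j), fE (Fs!j) - D j - {{q,y}}, insert y (S j))" "q \<notin> leaves (Fs!j)"
        using frontier[OF RFT inv jL nonempty[OF jl pj]] by blast
      have fq: "f q \<in> VB" "f q \<in> f ` USet Fs S" using imgD[OF inv jL qy(1)] by auto
      have fpq: "f p \<noteq> f q" using injD[OF RFT inv iL jL ij px(1) qy(1)] .
      show ?thesis
      proof (cases "d j = d i \<or> (\<forall>k<l. k \<noteq> i \<longrightarrow> k \<noteq> j \<longrightarrow> d k = 0)")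
        case caseA: True
        have LAr: "1 \<le> pl \<and> Inv l (d(i := d i - 1)) (pl - 1) (n - 1) \<and> Inv l (d(j := d j - 1)) (pl - 1) (n - 1)"
          using LA[where d=d, OF il jl ij mi mj pj caseA Iv nsum] .
        obtain u where u: "u \<in> pool Fs VB S f (R \<union> Bl)" using one_in LAr unfolding pl_def by blast
        have sumi: "n - 1 = (\<Sum>c<l. (d(i := d i - 1)) c)" using sum_dec[where d=d, OF il pi] nsum by simp
        have sumj: "n - 1 = (\<Sum>c<l. (d(j := d j - 1)) c)" using sum_dec[where d=d, OF jl pj] nsum by simp
        have cp: "card (pool Fs VB S f (R \<union> Bl) - {u}) = pl - 1"
          unfolding pl_def using u finpool by (simp add: card_Diff_singleton)
        obtain D1 S1 f1 where st1: "inv_st Fs VB \<phi> D1 S1 f1 (insert {f p, u} R) (insert {f q, u} Bl)"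
          "cnt Fs D1 = (cnt Fs D)(i := cnt Fs D i - 1)"
          "pool Fs VB S1 f1 (insert {f p, u} R \<union> insert {f q, u} Bl) = pool Fs VB S f (R \<union> Bl) - {u}"
          using branchA[OF RFT inv iL jL ij px(1-5) qy(1) u] by blast
        obtain D2 S2 f2 where st2: "inv_st Fs VB \<phi> D2 S2 f2 (insert {f q, u} R) (insert {f p, u} Bl)"
          "cnt Fs D2 = (cnt Fs D)(j := cnt Fs D j - 1)"
          "pool Fs VB S2 f2 (insert {f q, u} R \<union> insert {f p, u} Bl) = pool Fs VB S f (R \<union> Bl) - {u}"
          using branchA[OF RFT inv jL iL ij[symmetric] qy(1-5) px(1) u] by blast
        have w1: "wc_force VB n1 P (insert {f p, u} R) (insert {f q, u} Bl)"
          using IH[of n1 D1 S1 f1 "insert {f p, u} R" "insert {f q, u} Bl"] st1 cp sumi n1 LAr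
          unfolding d_def by simp
        have w2: "wc_force VB n1 P (insert {f q, u} R) (insert {f p, u} Bl)"
          using IH[of n1 D2 S2 f2 "insert {f q, u} R" "insert {f p, u} Bl"] st2 cp sumj n1 LAr
          unfolding d_def by simp
        have e1: "{f p, u} \<in> complete_edges VB - (R \<union> Bl)" using free_edge[OF fp u] .
        have e2: "{f q, u} \<in> complete_edges VB - (R \<union> Bl)" using free_edge[OF fq u] .
        have ne: "{f p, u} \<noteq> {f q, u}" using fpq by (auto simp: doubleton_eq_iff)
        have "wc_force VB (Suc n1) P R Bl" using wc_step[OF ne e1 e2 w1 w2] .
        then show ?thesis unfolding n1 P_def .
      next
        case caseM: False
        then have dji: "d j \<noteq> d i" and "\<not> (\<forall>k<l. k \<noteq> i \<longrightarrow> k \<noteq> j \<longrightarrow> d k = 0)" by auto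
        then obtain k where k: "k < l" "k \<noteq> i" "k \<noteq> j" "0 < d k" by auto
        have ik: "i \<noteq> k" and jk: "j \<noteq> k" using k by auto
        have kL: "k < length Fs" using k(1) unfolding l_def .
        have lt: "\<forall>a<l. a \<noteq> i \<longrightarrow> d a < d i"
        proof (intro allI impI)
          fix a assume "a < l" "a \<noteq> i"
          then have "d a \<le> d j" using mj by simp
          moreover have "d j < d i" using dji mi jl by (simp add: order_le_neq_trans)
          ultimately show "d a < d i" by simp
        qed
        obtain s z where sz: "s \<in> S k" "z \<in> fV (Fs!k)" "z \<notin> S k" "{s,z} \<in> fE (Fs!k) - D k"
          "rooted_forest (fV (Fs!k), fE (Fs!k) - D k - {{s,z}}, insert z (S k))" "s \<notin> leaves (Fs!k)"
          using frontier[OF RFT inv kL nonempty[OF k(1) k(4)]] by blast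
        have fs: "f s \<in> VB" "f s \<in> f ` USet Fs S" using imgD[OF inv kL sz(1)] by auto
        have fps: "f p \<noteq> f s" using injD[OF RFT inv iL kL ik px(1) sz(1)] .
        have fqs: "f q \<noteq> f s" using injD[OF RFT inv jL kL jk qy(1) sz(1)] .
        have LMj: "2 \<le> pl \<and> Inv l (d(i := d i - 1, j := d j - 1)) (pl - 2) (n - 2)"
          using LM[where d=d, OF il jl ij lt pj Iv nsum] .
        have LMk: "2 \<le> pl \<and> Inv l (d(i := d i - 1, k := d k - 1)) (pl - 2) (n - 2)"
          using LM[where d=d, OF il k(1) ik lt k(4) Iv nsum] .
        obtain u w where uw: "u \<in> pool Fs VB S f (R \<union> Bl)" "w \<in> pool Fs VB S f (R \<union> Bl)" "u \<noteq> w"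
          using two_in[OF finpool] LMj unfolding pl_def by blast
        have n2: "2 \<le> n" using sum_pair[OF il jl ij, of d] nsum pi pj by linarith
        obtain n2' where n2': "n = Suc (Suc n2')" using n2 by (metis add_2_eq_Suc le_Suc_ex)
        have sumij: "n - 2 = (\<Sum>c<l. (d(i := d i - 1, j := d j - 1)) c)"
        proof -
          have a: "(\<Sum>c<l. (d(i := d i - 1)) c) = n - 1" using sum_dec[where d=d, OF il pi] nsum by simp
          have "0 < (d(i := d i - 1)) j" using pj ij by simp
          then have "(\<Sum>c<l. ((d(i := d i - 1))(j := (d(i := d i - 1)) j - 1)) c) = (\<Sum>c<l. (d(i := d i - 1)) c) - 1"
            using sum_dec[where d="d(i := d i - 1)", OF jl] by blast
          then show ?thesis using a ij by simp
        qed
        have sumik: "n - 2 = (\<Sum>c<l. (d(i := d i - 1, k := d k - 1)) c)"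
        proof -
          have a: "(\<Sum>c<l. (d(i := d i - 1)) c) = n - 1" using sum_dec[where d=d, OF il pi] nsum by simp
          have "0 < (d(i := d i - 1)) k" using k(4) ik by simp
          then have "(\<Sum>c<l. ((d(i := d i - 1))(k := (d(i := d i - 1)) k - 1)) c) = (\<Sum>c<l. (d(i := d i - 1)) c) - 1"
            using sum_dec[where d="d(i := d i - 1)", OF k(1)] by blast
          then show ?thesis using a ik by simp
        qed
        have leaf: "wc_force VB n2' P (insert {f b1, a2} (insert {f p, a1} R)) (insert {f b2, a2} (insert {f p, a2} Bl))"
          if ab: "a1 \<in> pool Fs VB S f (R \<union> Bl)" "a2 \<in> pool Fs VB S f (R \<union> Bl)" "a1 \<noteq> a2"
            and jj: "j1 < length Fs" "k1 < length Fs" "i \<noteq> j1" "i \<noteq> k1" "j1 \<noteq> k1"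
            and b1: "b1 \<in> S j1" "c1 \<in> fV (Fs!j1)" "c1 \<notin> S j1" "{b1,c1} \<in> fE (Fs!j1) - D j1"
              "rooted_forest (fV (Fs!j1), fE (Fs!j1) - D j1 - {{b1,c1}}, insert c1 (S j1))"
            and b2: "b2 \<in> S k1"
            and Ij: "Inv l (d(i := d i - 1, j1 := d j1 - 1)) (pl - 2) (n - 2)"
            and sj: "n - 2 = (\<Sum>c<l. (d(i := d i - 1, j1 := d j1 - 1)) c)"
          for a1 a2 j1 k1 b1 c1 b2
        proof -
          obtain D' S' f' where st: "inv_st Fs VB \<phi> D' S' f' (insert {f b1, a2} (insert {f p, a1} R)) (insert {f b2, a2} (insert {f p, a2} Bl))"
            "cnt Fs D' = (cnt Fs D)(i := cnt Fs D i - 1, j1 := cnt Fs D j1 - 1)"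
            "pool Fs VB S' f' (insert {f b1, a2} (insert {f p, a1} R) \<union> insert {f b2, a2} (insert {f p, a2} Bl)) = pool Fs VB S f (R \<union> Bl) - {a1} - {a2}"
            using branchM[OF RFT inv iL jj(1,2,3,4,5) px(1-5) b1 b2 ab] by blast
          have "card (pool Fs VB S f (R \<union> Bl) - {a1} - {a2}) = pl - 2"
            unfolding pl_def using ab finpool by (simp add: card_Diff_singleton)
          then show ?thesis
            using IH[of n2' D' S' f' "insert {f b1, a2} (insert {f p, a1} R)" "insert {f b2, a2} (insert {f p, a2} Bl)"]
              st sj Ij n2' unfolding d_def by simp
        qed
        have round2: "wc_force VB (Suc n2') P (insert {f p, a1} R) (insert {f p, a2} Bl)"
          if ab: "a1 \<in> pool Fs VB S f (R \<union> Bl)" "a2 \<in> pool Fs VB S f (R \<union> Bl)" "a1 \<noteq> a2" for a1 a2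
        proof -
          have a2p: "a2 \<in> VB" "a2 \<notin> f ` USet Fs S" "\<forall>e\<in>R \<union> Bl. a2 \<notin> e" using poolD[OF ab(2)] by auto
          have fpa2: "f p \<noteq> a2" using fp(2) a2p(2) by blast
          have fqa2: "f q \<noteq> a2" using fq(2) a2p(2) by blast
          have fsa2: "f s \<noteq> a2" using fs(2) a2p(2) by blast
          have e3: "{f q, a2} \<in> complete_edges VB - (insert {f p, a1} R \<union> insert {f p, a2} Bl)"
          proof -
            have "{f q, a2} \<in> complete_edges VB - (R \<union> Bl)" using free_edge[OF fq ab(2)] .
            moreover have "{f q, a2} \<noteq> {f p, a1}" using fpq fqa2 fpa2 by (auto simp: doubleton_eq_iff)
            moreover have "{f q, a2} \<noteq> {f p, a2}" using fpq by (auto simp: doubleton_eq_iff)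
            ultimately show ?thesis by blast
          qed
          have e4: "{f s, a2} \<in> complete_edges VB - (insert {f p, a1} R \<union> insert {f p, a2} Bl)"
          proof -
            have "{f s, a2} \<in> complete_edges VB - (R \<union> Bl)" using free_edge[OF fs ab(2)] .
            moreover have "{f s, a2} \<noteq> {f p, a1}" using fps fsa2 fpa2 by (auto simp: doubleton_eq_iff)
            moreover have "{f s, a2} \<noteq> {f p, a2}" using fps by (auto simp: doubleton_eq_iff)
            ultimately show ?thesis by blast
          qed
          have ne: "{f q, a2} \<noteq> {f s, a2}" using fqs by (auto simp: doubleton_eq_iff)
          have l1: "wc_force VB n2' P (insert {f q, a2} (insert {f p, a1} R)) (insert {f s, a2} (insert {f p, a2} Bl))"
            using leaf[OF ab jL kL ij ik jk qy(1-5) sz(1) conjunct2[OF LMj] sumij] .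
          have l2: "wc_force VB n2' P (insert {f s, a2} (insert {f p, a1} R)) (insert {f q, a2} (insert {f p, a2} Bl))"
            using leaf[OF ab kL jL ik ij jk[symmetric] sz(1-5) qy(1) conjunct2[OF LMk] sumik] .
          show ?thesis using wc_step[OF ne e3 e4 l1 l2] .
        qed
        have e1: "{f p, u} \<in> complete_edges VB - (R \<union> Bl)" using free_edge[OF fp uw(1)] .
        have e2: "{f p, w} \<in> complete_edges VB - (R \<union> Bl)" using free_edge[OF fp uw(2)] .
        have ne: "{f p, u} \<noteq> {f p, w}" using uw(3) by (auto simp: doubleton_eq_iff)
        have "wc_force VB (Suc (Suc n2')) P R Bl"
          using wc_step[OF ne e1 e2 round2[OF uw] round2[OF uw(2) uw(1) uw(3)[symmetric]]] .
        then show ?thesis unfolding n2' P_def .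
      qed
    qed
  qed
qed

lemma listsum_nth: "(\<Sum>F\<leftarrow>Fs. (g F::nat)) = (\<Sum>a<length Fs. g (Fs!a))"
proof -
  have "(\<Sum>F\<leftarrow>Fs. g F) = (\<Sum>i = 0..<length (map g Fs). map g Fs ! i)" by (rule sum_list_sum_nth)
  also have "\<dots> = (\<Sum>i<length Fs. map g Fs ! i)" by (simp add: atLeast0LessThan)
  also have "\<dots> = (\<Sum>a<length Fs. g (Fs!a))" by (rule sum.cong) auto
  finally show ?thesis .
qed

lemma tF_le_eF: "tF Gs \<le> eF Gs"
proof -
  have "length (filter P xs) \<le> (\<Sum>F\<leftarrow>xs. card (fE F))" if "\<forall>F. P F \<longrightarrow> 0 < card (fE F)" for P and xs :: "'a rforest list"
  proof (induction xs)
    case Nil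
    then show ?case by simp
  next
    case (Cons F xs)
    have ih: "length (filter P xs) \<le> (\<Sum>F\<leftarrow>xs. card (fE F))" using Cons by blast
    show ?case
    proof (cases "P F")
      case True
      then have "0 < card (fE F)" using that by blast
      then show ?thesis using ih True by simp
    next
      case False
      then show ?thesis using ih by simp
    qed
  qed
  from this[of "\<lambda>F. 0 < card (fE F)" Gs] show ?thesis unfolding tF_def eF_def by simp
qed

lemma suitable_bound:
  assumes su: "suitable Gs" and a: "a < length Gs" and b: "b < length Gs" and ab: "a \<noteq> b"
  shows "2 * card (fE (Gs!a)) + card (fE (Gs!b)) \<le> eF Gs"
proof -
  define g where "g = (\<lambda>c. card (fE (Gs!c)))"
  define A where "A = aF Gs"
  define L where "L = length Gs"
  have rft: "rooted_forest_tuple Gs" using su unfolding suitable_def by (rule conjunct1)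
  have eq: "eF Gs = (\<Sum>c<L. g c)" unfolding eF_def g_def L_def by (rule listsum_nth)
  have gA: "g c \<le> A" if "c < L" for c
  proof -
    have "g c \<in> set (map (\<lambda>F. card (fE F)) Gs)" using that unfolding g_def L_def by auto
    then show ?thesis unfolding A_def aF_def by simp
  qed
  have ne: "set (map (\<lambda>F. card (fE F)) Gs) \<noteq> {}" using a by auto
  have Ain: "A \<in> set (map (\<lambda>F. card (fE F)) Gs)" unfolding A_def aF_def using Max_in[OF finite_set ne] .
  then obtain c0 where c0: "c0 < L" "g c0 = A" unfolding g_def L_def by (auto simp: in_set_conv_nth)
  have kc: "kF Gs = card {c. c < L \<and> g c = A}"
    unfolding kF_def length_filter_conv_card g_def L_def A_def by simp
  have kfin: "finite {c. c < L \<and> g c = A}" by (rule finite_subset[of _ "{..<L}"]) auto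
  have k1: "1 \<le> kF Gs"
  proof -
    have "{c0} \<subseteq> {c. c < L \<and> g c = A}" using c0 by auto
    then have "card {c0} \<le> card {c. c < L \<and> g c = A}" by (rule card_mono[OF kfin])
    then show ?thesis unfolding kc by simp
  qed
  have posA: "1 \<le> A"
  proof -
    have "\<exists>F\<in>set Gs. 0 < card (fE F)" using rft unfolding rooted_forest_tuple_def by (elim conjE)
    then obtain F where F: "F \<in> set Gs" "0 < card (fE F)" by blast
    then obtain c where c: "c < L" "Gs!c = F" unfolding L_def by (auto simp: in_set_conv_nth)
    have "g c = card (fE F)" unfolding g_def using c(2) by simp
    then show ?thesis using gA[OF c(1)] F(2) by linarith
  qed
  have aL: "a < L" and bL: "b < L" using a b unfolding L_def by auto
  have s2: "g a + g b \<le> eF Gs" using sum_pair[OF aL bL ab, of g] eq by simp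
  have ga: "g a \<le> A" and gb: "g b \<le> A" using gA aL bL by auto
  have "2 * g a + g b \<le> eF Gs"
  proof (cases "3 * int (aF Gs) + int (kF Gs) - int (eF Gs) \<le> 2")
    case True
    then have ie: "3 * int A + int (kF Gs) - int (eF Gs) \<le> 2" unfolding A_def .
    show ?thesis
    proof (cases "g a = A \<and> g b = A")
      case True
      have "{a,b} \<subseteq> {c. c < L \<and> g c = A}" using True aL bL by auto
      then have "card {a,b} \<le> kF Gs" unfolding kc using card_mono[OF kfin] by blast
      then have "2 \<le> kF Gs" using ab by simp
      then show ?thesis using ie ga gb by linarith
    next
      case False
      then have "2 * g a + g b \<le> 3 * A - 1" using ga gb posA by auto
      then show ?thesis using ie k1 posA by linarith
    qed
  next
    case False
    moreover have "3 * int (aF Gs) + int (kF Gs) - int (eF Gs) \<le> 2 \<or> (aF Gs = 1 \<and> tF Gs \<ge> 4)"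
      using su unfolding suitable_def by (rule conjunct2)
    ultimately have "aF Gs = 1 \<and> tF Gs \<ge> 4" by simp
    then have "A = 1" "4 \<le> eF Gs" using tF_le_eF[of Gs] unfolding A_def by auto
    then show ?thesis using ga gb by linarith
  qed
  then show ?thesis unfolding g_def .
qed

lemma suitable_bound1:
  assumes su: "suitable Gs" and a: "a < length Gs"
  shows "2 * card (fE (Gs!a)) \<le> eF Gs"
proof -
  define g where "g = (\<lambda>c. card (fE (Gs!c)))"
  define A where "A = aF Gs"
  define L where "L = length Gs"
  have rft: "rooted_forest_tuple Gs" using su unfolding suitable_def by (rule conjunct1)
  have gA: "g c \<le> A" if "c < L" for c
  proof -
    have "g c \<in> set (map (\<lambda>F. card (fE F)) Gs)" using that unfolding g_def L_def by auto
    then show ?thesis unfolding A_def aF_def by simp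
  qed
  have ne: "set (map (\<lambda>F. card (fE F)) Gs) \<noteq> {}" using a by auto
  have Ain: "A \<in> set (map (\<lambda>F. card (fE F)) Gs)" unfolding A_def aF_def using Max_in[OF finite_set ne] .
  then obtain c0 where c0: "c0 < L" "g c0 = A" unfolding g_def L_def by (auto simp: in_set_conv_nth)
  have kc: "kF Gs = card {c. c < L \<and> g c = A}"
    unfolding kF_def length_filter_conv_card g_def L_def A_def by simp
  have kfin: "finite {c. c < L \<and> g c = A}" by (rule finite_subset[of _ "{..<L}"]) auto
  have k1: "1 \<le> kF Gs"
  proof -
    have "{c0} \<subseteq> {c. c < L \<and> g c = A}" using c0 by auto
    then have "card {c0} \<le> card {c. c < L \<and> g c = A}" by (rule card_mono[OF kfin])
    then show ?thesis unfolding kc by simp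
  qed
  have posA: "1 \<le> A"
  proof -
    have "\<exists>F\<in>set Gs. 0 < card (fE F)" using rft unfolding rooted_forest_tuple_def by (elim conjE)
    then obtain F where F: "F \<in> set Gs" "0 < card (fE F)" by blast
    then obtain c where c: "c < L" "Gs!c = F" unfolding L_def by (auto simp: in_set_conv_nth)
    have "g c = card (fE F)" unfolding g_def using c(2) by simp
    then show ?thesis using gA[OF c(1)] F(2) by linarith
  qed
  have ga: "g a \<le> A" using gA a unfolding L_def by auto
  have "2 * g a \<le> eF Gs"
  proof (cases "3 * int (aF Gs) + int (kF Gs) - int (eF Gs) \<le> 2")
    case True
    then show ?thesis using ga k1 posA unfolding A_def by linarith
  next
    case False
    moreover have "3 * int (aF Gs) + int (kF Gs) - int (eF Gs) \<le> 2 \<or> (aF Gs = 1 \<and> tF Gs \<ge> 4)"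
      using su unfolding suitable_def by (rule conjunct2)
    ultimately have "aF Gs = 1 \<and> tF Gs \<ge> 4" by simp
    then have "A = 1" "4 \<le> eF Gs" using tF_le_eF[of Gs] unfolding A_def by auto
    then show ?thesis using ga by linarith
  qed
  then show ?thesis unfolding g_def .
qed

theorem lemma3p18:
  fixes Fs :: "'a rforest list" and VB :: "'b set" and \<phi> :: "'a \<Rightarrow> 'b" and m :: nat
  assumes "rooted_forest_tuple Fs"
    and "m_suitable m Fs"
    and "m > eF Fs"
    and "finite VB"
    and "card VB = m + vF Fs - eF Fs"
    and "inj_on \<phi> (tuple_roots Fs)"
    and "\<phi> ` tuple_roots Fs \<subseteq> VB"
  shows "wc_force VB (eF Fs) (good_red_copy Fs VB \<phi>) {} {}"
proof -
  note RFT = assms(1)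
  define l where "l = length Fs"
  obtain Gs where su: "suitable Gs" and eG: "eF Gs = m" and vs: "valid_subforest Fs Gs"
    using assms(2) unfolding m_suitable_def by blast
  have lG: "length Fs \<le> length Gs" using vs unfolding valid_subforest_def by blast
  have subE: "\<forall>i<length Fs. fE (Fs!i) \<subseteq> fE (Gs!i)" using vs unfolding valid_subforest_def by blast
  have rftG: "rooted_forest_tuple Gs" using su unfolding suitable_def by (rule conjunct1)
  define D0 :: "nat \<Rightarrow> 'a set set" where "D0 = (\<lambda>_. {})"
  define S0 where "S0 = (\<lambda>i. fR (Fs!i))"
  have US0: "USet Fs S0 = tuple_roots Fs" unfolding USet_def S0_def tuple_roots_conv ..
  have inv0: "inv_st Fs VB \<phi> D0 S0 \<phi> {} {}"
    unfolding inv_st_def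
  proof (intro conjI)
    show "inv_forests Fs D0 S0"
      unfolding inv_forests_def
    proof (intro allI impI conjI)
      fix i assume i: "i < length Fs"
      show "D0 i \<subseteq> fE (Fs!i)" unfolding D0_def by simp
      show "fR (Fs!i) \<subseteq> S0 i" unfolding S0_def by simp
      show "rooted_forest (fV (Fs!i), fE (Fs!i) - D0 i, S0 i)" unfolding D0_def S0_def
        using rft_rf[OF RFT i] by simp
      show "\<forall>e\<in>D0 i. e \<subseteq> S0 i" unfolding D0_def by simp
      show "\<forall>y\<in>S0 i - fR (Fs!i). \<exists>e\<in>D0 i. y \<in> e" unfolding S0_def by simp
    qed
    show "inv_map Fs VB \<phi> S0 \<phi>" unfolding inv_map_def US0 using assms(6,7) by simp
    show "inv_red Fs D0 \<phi> {}" unfolding inv_red_def D0_def by simp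
    show "inv_rootsfree Fs \<phi> ({} \<union> {})" unfolding inv_rootsfree_def by simp
    show "inv_blue Fs VB S0 \<phi> {}" unfolding inv_blue_def by simp
    show "inv_ni Fs S0 \<phi> ({} \<union> {})" unfolding inv_ni_def by simp
  qed
  have cnt0: "cnt Fs D0 = (\<lambda>a. card (fE (Fs!a)))" unfolding cnt_def D0_def by simp
  have eFs: "eF Fs = (\<Sum>a<length Fs. cnt Fs D0 a)" unfolding cnt0 eF_def by (rule listsum_nth)
  have pool0: "pool Fs VB S0 \<phi> ({} \<union> {}) = VB - \<phi> ` tuple_roots Fs"
    unfolding pool_def US0 by auto
  have finR: "finite (fR (Fs!a))" if "a < length Fs" for a
  proof -
    have "fR (Fs!a) \<subseteq> fV (Fs!a)" using rf_parts(3)[OF rft_rf[OF RFT that]] .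
    moreover have "finite (fV (Fs!a))" using rf_parts(1)[OF rft_rf[OF RFT that]] unfolding is_graph_def by (rule conjunct1)
    ultimately show ?thesis by (rule finite_subset)
  qed
  have cardR: "card (tuple_roots Fs) = (\<Sum>a<length Fs. card (fR (Fs!a)))"
    unfolding tuple_roots_conv
  proof (rule card_UN_disjoint)
    show "finite {..<length Fs}" by simp
    show "\<forall>i\<in>{..<length Fs}. finite (fR (Fs ! i))" using finR by simp
    show "\<forall>i\<in>{..<length Fs}. \<forall>j\<in>{..<length Fs}. i \<noteq> j \<longrightarrow> fR (Fs ! i) \<inter> fR (Fs ! j) = {}"
    proof (intro ballI impI)
      fix i j assume ij: "i \<in> {..<length Fs}" "j \<in> {..<length Fs}" "i \<noteq> j"
      have "fR (Fs!i) \<subseteq> fV (Fs!i)" using rf_parts(3)[OF rft_rf[OF RFT]] ij by simp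
      moreover have "fR (Fs!j) \<subseteq> fV (Fs!j)" using rf_parts(3)[OF rft_rf[OF RFT]] ij by simp
      moreover have "fV (Fs!i) \<inter> fV (Fs!j) = {}" using rft_disj[OF RFT] ij by simp
      ultimately show "fR (Fs ! i) \<inter> fR (Fs ! j) = {}" by blast
    qed
  qed
  have vFs: "vF Fs = eF Fs + (\<Sum>a<length Fs. card (fR (Fs!a)))"
  proof -
    have "vF Fs = (\<Sum>a<length Fs. card (fV (Fs!a)))" unfolding vF_def by (rule listsum_nth)
    also have "\<dots> = (\<Sum>a<length Fs. card (fE (Fs!a)) + card (fR (Fs!a)))"
      by (rule sum.cong) (use forest_card rft_rf[OF RFT] in auto)
    also have "\<dots> = (\<Sum>a<length Fs. card (fE (Fs!a))) + (\<Sum>a<length Fs. card (fR (Fs!a)))"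
      by (rule sum.distrib)
    also have "(\<Sum>a<length Fs. card (fE (Fs!a))) = eF Fs" unfolding eF_def by (rule listsum_nth[symmetric])
    finally show ?thesis .
  qed
  have cpool: "card (pool Fs VB S0 \<phi> ({} \<union> {})) = m"
  proof -
    have "card (\<phi> ` tuple_roots Fs) = card (tuple_roots Fs)" using card_image[OF assms(6)] .
    moreover have "card (VB - \<phi> ` tuple_roots Fs) = card VB - card (\<phi> ` tuple_roots Fs)"
      using card_Diff_subset[OF finite_subset[OF assms(7,4)] assms(7)] .
    ultimately show ?thesis unfolding pool0 using assms(5) vFs cardR by simp
  qed
  have Iv: "Inv (length Fs) (cnt Fs D0) m (eF Fs)"
    unfolding Inv_def cnt0
  proof (intro conjI allI impI)
    fix a b assume ab: "a < length Fs" "b < length Fs" "a \<noteq> b"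
    have finGa: "finite (fE (Gs!a))" using finE[OF rftG] ab lG by simp
    have finGb: "finite (fE (Gs!b))" using finE[OF rftG] ab lG by simp
    have "card (fE (Fs!a)) \<le> card (fE (Gs!a))" using card_mono[OF finGa] subE ab by simp
    moreover have "card (fE (Fs!b)) \<le> card (fE (Gs!b))" using card_mono[OF finGb] subE ab by simp
    moreover have "2 * card (fE (Gs!a)) + card (fE (Gs!b)) \<le> eF Gs"
      using suitable_bound[OF su] ab lG by simp
    ultimately show "2 * card (fE (Fs!a)) + card (fE (Fs!b)) \<le> m" using eG by linarith
  next
    fix a assume a: "a < length Fs"
    have finGa: "finite (fE (Gs!a))" using finE[OF rftG] a lG by simp
    have "card (fE (Fs!a)) \<le> card (fE (Gs!a))" using card_mono[OF finGa] subE a by simp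
    moreover have "2 * card (fE (Gs!a)) \<le> eF Gs"
      using suitable_bound1[OF su] a lG by simp
    ultimately show "2 * card (fE (Fs!a)) \<le> m" using eG by linarith
  next
    show "eF Fs < m" using assms(3) .
  qed
  show ?thesis
    using main_game[OF RFT assms(4) inv0 eFs] Iv cpool by simp
qed


end
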